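(* Let $\mathbf g=sl_2(\mathbb R)\ltimes\mathbb R^3$ with basis $e_1,\dots,e_6$ and brackets $[e_1,e_2]=e_6$, $[e_1,e_3]=e_5$, $[e_2,e_3]=e_4$, $[e_5,e_4]=-e_6$, $[e_1,e_4]=[e_1,e_5]=[e_1,e_6]=[e_2,e_5]=[e_3,e_6]=[e_6,e_5]=0$, $[e_2,e_6]=[e_3,e_5]=-e_1$, $[e_2,e_4]=e_3$, $[e_3,e_4]=-e_2$, $[e_6,e_4]=e_5$. If $\mathbf h$ is a $3$-dimensional subalgebra containing no nonzero ideal of $\mathbf g$ and $\mathbf m$ is a $3$-dimensional complement of $\mathbf h$ generating $\mathbf g$ with $[\mathbf h,\mathbf m]\subseteq\mathbf m$, then up to conjugation one of the following holds: (i) $\mathbf h=\langle e_1,e_2,e_6\rangle$ and $\mathbf m=\langle e_5,\ e_3-b_3e_1-b_2e_6,\ e_4+b_2e_1+b_3e_6\rangle$ with $b_2,b_3\in\mathbb R$; (ii) $\mathbf h=\langle e_2,e_3,e_4\rangle$ and $\mathbf m=\langle e_1+a e_4,\ e_6-a e_3,\ e_5+a e_2\rangle$ with $a\in\mathbb R\setminus\{0\}$; (iii) $\mathbf h=\langle e_4,e_5,e_6\rangle$ and $\mathbf m=\langle e_1,\ e_2+b_1e_6+b_2e_5,\ e_3-b_2e_6+b_1e_5\rangle$ with $b_1,b_2\in\mathbb R$.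
   Context: $\mathbf g$ is the Lie algebra of the group of pairs $(A,X)$, $A\in SL_2(\mathbb R)$ (or $PSL_2(\mathbb R)$), $X$ a real traceless $2\times 2$ matrix, with multiplication $(A_1,X_1)(A_2,X_2)=(A_1A_2,A_2^{-1}X_1A_2+X_2)$. The basis is $e_1=(0,\begin{pmatrix}0&-1\\1&0\end{pmatrix})$, $e_2=(\begin{pmatrix}1&0\\0&-1\end{pmatrix},0)$, $e_3=(\begin{pmatrix}0&1\\1&0\end{pmatrix},0)$, $e_4=(\begin{pmatrix}0&1\\-1&0\end{pmatrix},0)$, $e_5=(0,\begin{pmatrix}-1&0\\0&1\end{pmatrix})$, $e_6=(0,\begin{pmatrix}0&1\\1&0\end{pmatrix})$. *)

theory Defs
  imports "HOL-Analysis.Analysis"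
begin

text \<open>The Lie algebra g = sl2(R) semidirect R^3, modelled on real^6 in the basis e_1..e_6.\<close>

definition e :: "6 \<Rightarrow> real^6" where
  "e i = axis i 1"

definition sc :: "6 \<Rightarrow> 6 \<Rightarrow> real^6" where
  "sc i j =
    (if i = 1 \<and> j = 2 then e 6 else if i = 2 \<and> j = 1 then - e 6
     else if i = 1 \<and> j = 3 then e 5 else if i = 3 \<and> j = 1 then - e 5
     else if i = 2 \<and> j = 3 then e 4 else if i = 3 \<and> j = 2 then - e 4
     else if i = 5 \<and> j = 4 then - e 6 else if i = 4 \<and> j = 5 then e 6
     else if i = 2 \<and> j = 6 then - e 1 else if i = 6 \<and> j = 2 then e 1
     else if i = 3 \<and> j = 5 then - e 1 else if i = 5 \<and> j = 3 then e 1
     else if i = 2 \<and> j = 4 then e 3 else if i = 4 \<and> j = 2 then - e 3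
     else if i = 3 \<and> j = 4 then - e 2 else if i = 4 \<and> j = 3 then e 2
     else if i = 6 \<and> j = 4 then e 5 else if i = 4 \<and> j = 6 then - e 5
     else 0)"

definition lie_br :: "real^6 \<Rightarrow> real^6 \<Rightarrow> real^6" where
  "lie_br x y = (\<Sum>i\<in>UNIV. \<Sum>j\<in>UNIV. (x$i * y$j) *\<^sub>R sc i j)"

definition is_subalgebra :: "(real^6) set \<Rightarrow> bool" where
  "is_subalgebra S \<longleftrightarrow> subspace S \<and> (\<forall>x\<in>S. \<forall>y\<in>S. lie_br x y \<in> S)"

definition is_ideal :: "(real^6) set \<Rightarrow> bool" where
  "is_ideal I \<longleftrightarrow> subspace I \<and> (\<forall>x. \<forall>y\<in>I. lie_br x y \<in> I)"

definition generates :: "(real^6) set \<Rightarrow> bool" where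
  "generates M \<longleftrightarrow> (\<forall>S. is_subalgebra S \<and> M \<subseteq> S \<longrightarrow> S = UNIV)"

text \<open>The concrete group model: pairs (A,X), A in SL_2(R), X traceless,
  product (A1,X1)(A2,X2) = (A1 A2, A2^-1 X1 A2 + X2).
  Its Lie algebra consists of pairs (U,V) of traceless matrices; the adjoint action is
  Ad_(A,X)(U,V) = (A U A^-1, A (X U - U X + V) A^-1).\<close>

definition mat2 :: "real \<Rightarrow> real \<Rightarrow> real \<Rightarrow> real \<Rightarrow> real^2^2" where
  "mat2 a b c d = (\<chi> i j. if i = 1 then (if j = 1 then a else b) else (if j = 1 then c else d))"

definition to_pair :: "real^6 \<Rightarrow> (real^2^2) \<times> (real^2^2)" where
  "to_pair v =
    (v$2 *\<^sub>R mat2 1 0 0 (-1) + v$3 *\<^sub>R mat2 0 1 1 0 + v$4 *\<^sub>R mat2 0 1 (-1) 0,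
     v$1 *\<^sub>R mat2 0 (-1) 1 0 + v$5 *\<^sub>R mat2 (-1) 0 0 1 + v$6 *\<^sub>R mat2 0 1 1 0)"

definition from_pair :: "(real^2^2) \<times> (real^2^2) \<Rightarrow> real^6" where
  "from_pair p = (case p of (U, V) \<Rightarrow>
     vector [(V$2$1 - V$1$2) / 2, U$1$1, (U$1$2 + U$2$1) / 2, (U$1$2 - U$2$1) / 2,
             - V$1$1, (V$1$2 + V$2$1) / 2])"

definition Ad :: "real^2^2 \<Rightarrow> real^2^2 \<Rightarrow> real^6 \<Rightarrow> real^6" where
  "Ad A X v = (case to_pair v of (U, V) \<Rightarrow>
     from_pair (A ** U ** matrix_inv A, A ** (X ** U - U ** X + V) ** matrix_inv A))"

end

theory Submission
  imports Defs
begin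


lemma UNIV6: "(UNIV::6 set) = {1,2,3,4,5,6}"
proof -
  have "card {1,2,3,4,5,6::6} = 6" by simp
  moreover have "CARD(6) = 6" by simp
  ultimately show ?thesis using card_subset_eq[of "UNIV::6 set" "{1,2,3,4,5,6}"] by simp
qed

lemma sum6: "sum f (UNIV::6 set) = f 1 + f 2 + f 3 + f 4 + f 5 + f 6"
  unfolding UNIV6 by (simp add: ac_simps)

lemma forall6: "(\<forall>i::6. P i) \<longleftrightarrow> P 1 \<and> P 2 \<and> P 3 \<and> P 4 \<and> P 5 \<and> P 6"
  using UNIV6 by (metis UNIV_I insert_iff empty_iff)

lemma vec6_eq: "(x::real^6) = y \<longleftrightarrow> x$1 = y$1 \<and> x$2 = y$2 \<and> x$3 = y$3 \<and> x$4 = y$4 \<and> x$5 = y$5 \<and> x$6 = y$6"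
  by (simp add: vec_eq_iff forall6)

definition v6 :: "real \<Rightarrow> real \<Rightarrow> real \<Rightarrow> real \<Rightarrow> real \<Rightarrow> real \<Rightarrow> real^6" where
  "v6 a1 a2 a3 a4 a5 a6 = (\<chi> i. if i = 1 then a1 else if i = 2 then a2 else if i = 3 then a3
      else if i = 4 then a4 else if i = 5 then a5 else a6)"

lemma v6_comp[simp]: "v6 a1 a2 a3 a4 a5 a6 $ 1 = a1" "v6 a1 a2 a3 a4 a5 a6 $ 2 = a2"
  "v6 a1 a2 a3 a4 a5 a6 $ 3 = a3" "v6 a1 a2 a3 a4 a5 a6 $ 4 = a4"
  "v6 a1 a2 a3 a4 a5 a6 $ 5 = a5" "v6 a1 a2 a3 a4 a5 a6 $ 6 = a6"
  by (simp_all add: v6_def)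

lemma e_comp[simp]: "e i $ j = (if j = i then 1 else 0)"
  by (simp add: e_def axis_def)

lemma sc_comp: "sc i j $ k = (if i = 1 \<and> j = 2 then e 6 else if i = 2 \<and> j = 1 then - e 6
     else if i = 1 \<and> j = 3 then e 5 else if i = 3 \<and> j = 1 then - e 5
     else if i = 2 \<and> j = 3 then e 4 else if i = 3 \<and> j = 2 then - e 4
     else if i = 5 \<and> j = 4 then - e 6 else if i = 4 \<and> j = 5 then e 6
     else if i = 2 \<and> j = 6 then - e 1 else if i = 6 \<and> j = 2 then e 1
     else if i = 3 \<and> j = 5 then - e 1 else if i = 5 \<and> j = 3 then e 1
     else if i = 2 \<and> j = 4 then e 3 else if i = 4 \<and> j = 2 then - e 3
     else if i = 3 \<and> j = 4 then - e 2 else if i = 4 \<and> j = 3 then e 2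
     else if i = 6 \<and> j = 4 then e 5 else if i = 4 \<and> j = 6 then - e 5
     else 0) $ k" by (simp add: sc_def)

lemma lie_br_v6: "lie_br x y = v6 (x$6*y$2 - x$2*y$6 + x$5*y$3 - x$3*y$5) (x$4*y$3 - x$3*y$4)
   (x$2*y$4 - x$4*y$2) (x$2*y$3 - x$3*y$2) (x$1*y$3 - x$3*y$1 + x$6*y$4 - x$4*y$6)
   (x$1*y$2 - x$2*y$1 + x$4*y$5 - x$5*y$4)"
  unfolding vec6_eq lie_br_def
  by (simp add: sum_component sum6 sc_def algebra_simps)

lemma lie_br_comp[simp]:
  "lie_br x y $ 1 = x$6*y$2 - x$2*y$6 + x$5*y$3 - x$3*y$5"
  "lie_br x y $ 2 = x$4*y$3 - x$3*y$4"
  "lie_br x y $ 3 = x$2*y$4 - x$4*y$2"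
  "lie_br x y $ 4 = x$2*y$3 - x$3*y$2"
  "lie_br x y $ 5 = x$1*y$3 - x$3*y$1 + x$6*y$4 - x$4*y$6"
  "lie_br x y $ 6 = x$1*y$2 - x$2*y$1 + x$4*y$5 - x$5*y$4"
  by (simp_all add: lie_br_v6)


lemma mat2_comp[simp]: "mat2 a b c d $ 1 $ 1 = a" "mat2 a b c d $ 1 $ 2 = b"
  "mat2 a b c d $ 2 $ 1 = c" "mat2 a b c d $ 2 $ 2 = d"
  by (simp_all add: mat2_def)

lemma mat2_eq: "((A::real^2^2) = B) \<longleftrightarrow> A$1$1 = B$1$1 \<and> A$1$2 = B$1$2 \<and> A$2$1 = B$2$1 \<and> A$2$2 = B$2$2"
  by (auto simp add: vec_eq_iff forall_2)

lemma mm2[simp]: "((A::real^2^2) ** B) $ i $ j = A$i$1 * B$1$j + A$i$2 * B$2$j"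
  by (simp add: matrix_matrix_mult_def sum_2)

lemma matrix_inv_det1:
  assumes "det (A::real^2^2) = 1"
  shows "matrix_inv A = mat2 (A$2$2) (-A$1$2) (-A$2$1) (A$1$1)"
proof -
  let ?B = "mat2 (A$2$2) (-A$1$2) (-A$2$1) (A$1$1)"
  have d: "A$1$1 * A$2$2 - A$1$2 * A$2$1 = 1" using assms by (simp add: det_2)
  have 1: "A ** ?B = mat 1" "?B ** A = mat 1"
    using d by (auto simp add: mat2_eq mat_def algebra_simps)
  have "\<And>C. A ** C = mat 1 \<and> C ** A = mat 1 \<Longrightarrow> C = ?B"
  proof -
    fix C assume "A ** C = mat 1 \<and> C ** A = mat 1"
    then have "C = (?B ** A) ** C" using 1 by (simp add: matrix_mul_lid)
    also have "\<dots> = ?B ** (A ** C)" by (simp add: matrix_mul_assoc)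
    also have "\<dots> = ?B" using \<open>A ** C = mat 1 \<and> C ** A = mat 1\<close> by (simp add: matrix_mul_rid)
    finally show "C = ?B" .
  qed
  then show ?thesis unfolding matrix_inv_def using 1 by (metis (mono_tags, lifting) someI)
qed

lemma vector6: "(vector [a1,a2,a3,a4,a5,a6] :: real^6) = v6 a1 a2 a3 a4 a5 a6"
  by (simp add: vec6_eq vector_def)

lemma vec3_eq: "(x::real^3) = y \<longleftrightarrow> x$1 = y$1 \<and> x$2 = y$2 \<and> x$3 = y$3"
  by (simp add: vec_eq_iff forall_3)

definition mH :: "real\<Rightarrow>real\<Rightarrow>real\<Rightarrow>real\<Rightarrow>real\<Rightarrow>real\<Rightarrow>real\<Rightarrow>real" where
 "mH a b c d p q r = (a*d + b*c)*p + (b*d - a*c)*q - (a*c + b*d)*r"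
definition mS :: "real\<Rightarrow>real\<Rightarrow>real\<Rightarrow>real\<Rightarrow>real\<Rightarrow>real\<Rightarrow>real\<Rightarrow>real" where
 "mS a b c d p q r = (c*d - a*b)*p + (a^2-b^2-c^2+d^2)/2*q + (a^2+b^2-c^2-d^2)/2*r"
definition mK :: "real\<Rightarrow>real\<Rightarrow>real\<Rightarrow>real\<Rightarrow>real\<Rightarrow>real\<Rightarrow>real\<Rightarrow>real" where
 "mK a b c d p q r = -(a*b + c*d)*p + (a^2-b^2+c^2-d^2)/2*q + (a^2+b^2+c^2+d^2)/2*r"

definition M3 :: "real^2^2 \<Rightarrow> real^3 \<Rightarrow> real^3" where
 "M3 A u = vector [mH (A$1$1) (A$1$2) (A$2$1) (A$2$2) (u$1) (u$2) (u$3),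
                   mS (A$1$1) (A$1$2) (A$2$1) (A$2$2) (u$1) (u$2) (u$3),
                   mK (A$1$1) (A$1$2) (A$2$1) (A$2$2) (u$1) (u$2) (u$3)]"

definition br3 :: "real^3 \<Rightarrow> real^3 \<Rightarrow> real^3" where
 "br3 u w = vector [u$3*w$2 - u$2*w$3, u$1*w$3 - u$3*w$1, u$1*w$2 - u$2*w$1]"

definition U6 :: "real^6 \<Rightarrow> real^3" where "U6 v = vector [v$2, v$3, v$4]"
definition W6 :: "real^6 \<Rightarrow> real^3" where "W6 v = vector [-v$5, v$6, -v$1]"
definition mk :: "real^3 \<Rightarrow> real^3 \<Rightarrow> real^6" where
 "mk u w = v6 (-(w$3)) (u$1) (u$2) (u$3) (-(w$1)) (w$2)"

lemma U6_mk[simp]: "U6 (mk u w) = u" by (simp add: U6_def mk_def vec3_eq)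
lemma W6_mk[simp]: "W6 (mk u w) = w" by (simp add: W6_def mk_def vec3_eq)

lemma lie_br_mk: "lie_br x y = mk (br3 (U6 x) (U6 y)) (br3 (U6 x) (W6 y) + br3 (W6 x) (U6 y))"
  by (simp add: vec6_eq mk_def br3_def U6_def W6_def algebra_simps)

definition AdA :: "real^2^2 \<Rightarrow> real^6 \<Rightarrow> real^6" where
 "AdA A v = mk (M3 A (U6 v)) (M3 A (W6 v))"

definition xi :: "real^2^2 \<Rightarrow> real^6" where
  "xi X = v6 (X$2$1 - X$1$2) 0 0 0 (-2 * X$1$1) (X$1$2 + X$2$1)"

lemma Ad_eq:
  assumes "det A = 1" "trace X = 0"
  shows "Ad A X v = AdA A (v + lie_br (xi X) v)"
proof -
  have t: "X$2$2 = - X$1$1" using assms(2) by (simp add: trace_def sum_2)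
  show ?thesis
    unfolding Ad_def to_pair_def from_pair_def matrix_inv_det1[OF assms(1)]
    apply (simp add: vector6 vec6_eq AdA_def xi_def Let_def t mk_def M3_def U6_def W6_def mH_def mS_def mK_def)
    apply (simp add: algebra_simps power2_eq_square)
    done
qed

lemma hH: "mK a b c d p q r * mS a b c d p' q' r' - mS a b c d p q r * mK a b c d p' q' r'
   = (a*d-b*c) * mH a b c d (r*q' - q*r') (p*r' - r*p') (p*q' - q*p')"
  unfolding mH_def mS_def mK_def by (simp add: field_simps power2_eq_square; algebra)
lemma hS: "mH a b c d p q r * mK a b c d p' q' r' - mK a b c d p q r * mH a b c d p' q' r'
   = (a*d-b*c) * mS a b c d (r*q' - q*r') (p*r' - r*p') (p*q' - q*p')"
  unfolding mH_def mS_def mK_def by (simp add: field_simps power2_eq_square; algebra)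
lemma hK: "mH a b c d p q r * mS a b c d p' q' r' - mS a b c d p q r * mH a b c d p' q' r'
   = (a*d-b*c) * mK a b c d (r*q' - q*r') (p*r' - r*p') (p*q' - q*p')"
  unfolding mH_def mS_def mK_def by (simp add: field_simps power2_eq_square; algebra)

lemma M3_br: "br3 (M3 A u) (M3 A w) = det A *\<^sub>R M3 A (br3 u w)"
  by (simp add: vec3_eq br3_def M3_def det_2 hH hS hK)


lemma M3_add: "M3 A (u + w) = M3 A u + M3 A w"
  by (simp add: vec3_eq M3_def mH_def mS_def mK_def; simp add: field_simps)
lemma M3_scale: "M3 A (k *\<^sub>R u) = k *\<^sub>R M3 A u"
  by (simp add: vec3_eq M3_def mH_def mS_def mK_def; simp add: field_simps)
lemma M3_zero[simp]: "M3 A 0 = 0"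
  by (simp add: vec3_eq M3_def mH_def mS_def mK_def; simp add: field_simps)

lemma cH: "mH a' b' c' d' (mH a b c d p q r) (mS a b c d p q r) (mK a b c d p q r)
  = mH (a'*a+b'*c) (a'*b+b'*d) (c'*a+d'*c) (c'*b+d'*d) p q r"
  unfolding mH_def mS_def mK_def by (simp add: field_simps power2_eq_square; algebra)
lemma cS: "mS a' b' c' d' (mH a b c d p q r) (mS a b c d p q r) (mK a b c d p q r)
  = mS (a'*a+b'*c) (a'*b+b'*d) (c'*a+d'*c) (c'*b+d'*d) p q r"
  unfolding mH_def mS_def mK_def by (simp add: field_simps power2_eq_square; algebra)
lemma cK: "mK a' b' c' d' (mH a b c d p q r) (mS a b c d p q r) (mK a b c d p q r)
  = mK (a'*a+b'*c) (a'*b+b'*d) (c'*a+d'*c) (c'*b+d'*d) p q r"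
  unfolding mH_def mS_def mK_def by (simp add: field_simps power2_eq_square; algebra)

lemma M3_comp: "M3 B (M3 A u) = M3 (B ** A) u"
  by (simp add: vec3_eq M3_def cH cS cK)

lemma M3_id: "M3 (mat 1) u = u"
  by (simp add: vec3_eq M3_def mH_def mS_def mK_def mat_def)

lemma mk_add: "mk u w + mk u' w' = mk (u + u') (w + w')"
  by (simp add: vec6_eq mk_def)
lemma mk_scale: "k *\<^sub>R mk u w = mk (k *\<^sub>R u) (k *\<^sub>R w)"
  by (simp add: vec6_eq mk_def)
lemma U6_add: "U6 (x + y) = U6 x + U6 y" by (simp add: U6_def vec3_eq)
lemma W6_add: "W6 (x + y) = W6 x + W6 y" by (simp add: W6_def vec3_eq)
lemma U6_scale: "U6 (k *\<^sub>R x) = k *\<^sub>R U6 x" by (simp add: U6_def vec3_eq)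
lemma W6_scale: "W6 (k *\<^sub>R x) = k *\<^sub>R W6 x" by (simp add: W6_def vec3_eq)

lemma AdA_add: "AdA A (x + y) = AdA A x + AdA A y"
  by (simp add: AdA_def U6_add W6_add M3_add mk_add)
lemma AdA_scale: "AdA A (k *\<^sub>R x) = k *\<^sub>R AdA A x"
  by (simp add: AdA_def U6_scale W6_scale M3_scale mk_scale)
lemma AdA_linear: "linear (AdA A)"
  by (simp add: linearI AdA_add AdA_scale)

lemma AdA_hom: "det A = 1 \<Longrightarrow> AdA A (lie_br x y) = lie_br (AdA A x) (AdA A y)"
  by (simp add: lie_br_mk AdA_def M3_br M3_add)

lemma mk_UW: "mk (U6 v) (W6 v) = v" by (simp add: vec6_eq mk_def U6_def W6_def)

lemma AdA_comp: "AdA B (AdA A v) = AdA (B ** A) v"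
  by (simp add: AdA_def M3_comp)
lemma AdA_id: "AdA (mat 1) v = v"
  by (simp add: AdA_def M3_id mk_UW)

definition adj2 :: "real^2^2 \<Rightarrow> real^2^2" where
  "adj2 A = mat2 (A$2$2) (-A$1$2) (-A$2$1) (A$1$1)"
lemma adj2_det: "det A = 1 \<Longrightarrow> det (adj2 A) = 1"
  by (simp add: adj2_def det_2 algebra_simps)
lemma adj2_mult: "det A = 1 \<Longrightarrow> A ** adj2 A = mat 1"
  by (simp add: adj2_def det_2 mat2_eq mat_def algebra_simps)
lemma adj2_mult': "det A = 1 \<Longrightarrow> adj2 A ** A = mat 1"
  by (simp add: adj2_def det_2 mat2_eq mat_def algebra_simps)

lemma lie_V_U6: "U6 w = 0 \<Longrightarrow> U6 (lie_br w x) = 0"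
  by (simp add: U6_def vec3_eq)
lemma lie_U6_V: "U6 (lie_br x y) = br3 (U6 x) (U6 y)"
  by (simp add: lie_br_mk)

lemma T_hom: "U6 w = 0 \<Longrightarrow> lie_br (x + lie_br w x) (y + lie_br w y) = lie_br x y + lie_br w (lie_br x y)"
  by (simp add: vec6_eq U6_def vec3_eq algebra_simps)

lemma T_comp: "U6 w = 0 \<Longrightarrow> U6 w' = 0 \<Longrightarrow>
   (v + lie_br w' v) + lie_br w (v + lie_br w' v) = v + lie_br (w + w') v"
  by (simp add: vec6_eq U6_def vec3_eq algebra_simps)

lemma AdA_V: "U6 w = 0 \<Longrightarrow> U6 (AdA A w) = 0"
  by (simp add: AdA_def)

lemma xi_V: "U6 (xi X) = 0" by (simp add: xi_def U6_def vec3_eq)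

definition xinv :: "real^6 \<Rightarrow> real^2^2" where
  "xinv w = mat2 (- w$5 / 2) ((w$6 - w$1)/2) ((w$6 + w$1)/2) (w$5/2)"
lemma xinv: "U6 w = 0 \<Longrightarrow> xi (xinv w) = w" "trace (xinv w) = 0"
  by (simp_all add: xi_def xinv_def vec6_eq U6_def vec3_eq trace_def sum_2 field_simps)

lemma lie_br_add1: "lie_br (x + y) z = lie_br x z + lie_br y z" by (simp add: vec6_eq algebra_simps)
lemma lie_br_add2: "lie_br z (x + y) = lie_br z x + lie_br z y" by (simp add: vec6_eq algebra_simps)
lemma lie_br_scale1: "lie_br (k *\<^sub>R x) z = k *\<^sub>R lie_br x z" by (simp add: vec6_eq algebra_simps)
lemma lie_br_scale2: "lie_br z (k *\<^sub>R x) = k *\<^sub>R lie_br z x" by (simp add: vec6_eq algebra_simps)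
lemma lie_br_anti: "lie_br x y = - lie_br y x" by (simp add: vec6_eq algebra_simps)
lemma lie_br_self[simp]: "lie_br x x = 0" by (simp add: vec6_eq algebra_simps)
lemma lie_br_zero[simp]: "lie_br 0 x = 0" "lie_br x 0 = 0" by (simp_all add: vec6_eq)

lemma Ad_comp:
  assumes "det A = 1" "trace X = 0" "det B = 1" "trace Y = 0"
  shows "Ad B Y (Ad A X v) = Ad (B ** A) (xinv (xi X + AdA (adj2 A) (xi Y))) v"
proof -
  let ?z = "AdA (adj2 A) (xi Y)"
  have zV: "U6 ?z = 0" by (simp add: AdA_V xi_V)
  have z: "AdA A ?z = xi Y" using assms(1) by (simp add: AdA_comp adj2_mult AdA_id)
  have sV: "U6 (xi X + ?z) = 0" using zV xi_V by (simp add: U6_add)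
  have dBA: "det (B ** A) = 1" using assms by (simp add: det_mul)
  have "Ad B Y (Ad A X v) = AdA B (AdA A (v + lie_br (xi X) v) + lie_br (xi Y) (AdA A (v + lie_br (xi X) v)))"
    using assms by (simp add: Ad_eq)
  also have "AdA A (v + lie_br (xi X) v) + lie_br (xi Y) (AdA A (v + lie_br (xi X) v))
     = AdA A ((v + lie_br (xi X) v) + lie_br ?z (v + lie_br (xi X) v))"
    using assms(1) z by (simp add: AdA_add AdA_hom)
  also have "(v + lie_br (xi X) v) + lie_br ?z (v + lie_br (xi X) v) = v + lie_br (?z + xi X) v"
    using T_comp[OF zV xi_V] .
  finally show ?thesis using dBA assms sV
    by (simp add: Ad_eq AdA_comp xinv add.commute)
qed

lemma Ad_id: "Ad (mat 1) (xinv 0) v = v"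
  by (simp add: Ad_eq det_I xinv AdA_id U6_def vec3_eq)


definition Yinv :: "real^2^2 \<Rightarrow> real^2^2 \<Rightarrow> real^2^2" where
  "Yinv A X = xinv (- AdA A (xi X))"

lemma Ad_inv1:
  assumes "det A = 1" "trace X = 0"
  shows "Ad (adj2 A) (Yinv A X) (Ad A X v) = v"
proof -
  have V: "U6 (- AdA A (xi X)) = 0" using AdA_V[OF xi_V] by (simp add: U6_def vec3_eq)
  have "xi X + AdA (adj2 A) (xi (Yinv A X)) = 0"
    using V assms by (simp add: Yinv_def xinv AdA_scale[of _ "-1", simplified] AdA_comp adj2_mult' AdA_id)
  then show ?thesis using assms
    by (simp add: Ad_comp adj2_det Yinv_def xinv adj2_mult' Ad_id)
qed

lemma Ad_inv2:
  assumes "det A = 1" "trace X = 0"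
  shows "Ad A X (Ad (adj2 A) (Yinv A X) v) = v"
proof -
  have V: "U6 (- AdA A (xi X)) = 0" using AdA_V[OF xi_V] by (simp add: U6_def vec3_eq)
  have aa: "adj2 (adj2 A) = A" by (simp add: adj2_def mat2_eq)
  have "xi (Yinv A X) + AdA (adj2 (adj2 A)) (xi X) = 0"
    using V assms by (simp add: Yinv_def xinv aa)
  then show ?thesis using assms Ad_comp[of "adj2 A" "Yinv A X" A X v]
    by (simp add: adj2_det Yinv_def xinv adj2_mult Ad_id aa)
qed

lemma Ad_linear: "det A = 1 \<Longrightarrow> trace X = 0 \<Longrightarrow> linear (Ad A X)"
  by (rule linearI) (simp_all add: Ad_eq AdA_add AdA_scale lie_br_add2 lie_br_scale2 algebra_simps)

lemma Ad_hom: "det A = 1 \<Longrightarrow> trace X = 0 \<Longrightarrow> Ad A X (lie_br x y) = lie_br (Ad A X x) (Ad A X y)"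
  by (simp add: Ad_eq T_hom[OF xi_V, symmetric] AdA_hom)

lemma Ad_inj: "det A = 1 \<Longrightarrow> trace X = 0 \<Longrightarrow> inj (Ad A X)"
  by (metis Ad_inv1 injI)

lemma Ad_surj: "det A = 1 \<Longrightarrow> trace X = 0 \<Longrightarrow> surj (Ad A X)"
  by (metis Ad_inv2 surjI)

definition good :: "(real^6) set \<Rightarrow> (real^6) set \<Rightarrow> bool" where
 "good h m \<longleftrightarrow> is_subalgebra h \<and> dim h = 3 \<and> subspace m \<and> dim m = 3 \<and> h \<inter> m = {0}
    \<and> {x + y | x y. x \<in> h \<and> y \<in> m} = UNIV \<and> generates m \<and> (\<forall>x\<in>h. \<forall>y\<in>m. lie_br x y \<in> m)"

lemma good_transfer:
  assumes g: "good h m" and A: "det A = 1" "trace X = 0"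
  shows "good (Ad A X ` h) (Ad A X ` m)"
proof -
  let ?f = "Ad A X"
  have lin: "linear ?f" using Ad_linear A .
  have inj: "inj ?f" using Ad_inj A .
  have hom: "\<And>x y. ?f (lie_br x y) = lie_br (?f x) (?f y)" using Ad_hom A by blast
  let ?g = "Ad (adj2 A) (Yinv A X)"
  have A': "det (adj2 A) = 1" "trace (Yinv A X) = 0" using A by (simp_all add: adj2_det Yinv_def xinv)
  have ghom: "\<And>x y. ?g (lie_br x y) = lie_br (?g x) (?g y)" using Ad_hom A' by blast
  have glin: "linear ?g" using Ad_linear A' .
  have fg: "\<And>v. ?f (?g v) = v" using Ad_inv2 A by blast
  have gf: "\<And>v. ?g (?f v) = v" using Ad_inv1 A by blast
  have sub: "is_subalgebra (?f ` h)"
    using g unfolding good_def is_subalgebra_def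
    by (auto simp: linear_subspace_image[OF lin] hom[symmetric])
  have dh: "dim (?f ` h) = 3" using g dim_image_eq[OF lin] inj unfolding good_def
    by (metis inj_on_subset subset_UNIV)
  have dm: "dim (?f ` m) = 3" using g dim_image_eq[OF lin] inj unfolding good_def
    by (metis inj_on_subset subset_UNIV)
  have sm: "subspace (?f ` m)" using g linear_subspace_image[OF lin] unfolding good_def by blast
  have int: "?f ` h \<inter> ?f ` m = {0}"
  proof -
    have "?f ` h \<inter> ?f ` m = ?f ` (h \<inter> m)" using inj by (simp add: image_Int)
    also have "\<dots> = {0}" using g linear_0[OF lin] unfolding good_def by simp
    finally show ?thesis .
  qed
  have sum: "{x + y | x y. x \<in> ?f ` h \<and> y \<in> ?f ` m} = UNIV"
  proof -
    { fix z
      obtain a b where "a \<in> h" "b \<in> m" "?g z = a + b" using g unfolding good_def by blast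
      then have "z = ?f a + ?f b" using fg linear_add[OF lin] by metis
      then have "z \<in> {x + y | x y. x \<in> ?f ` h \<and> y \<in> ?f ` m}" using \<open>a \<in> h\<close> \<open>b \<in> m\<close> by blast }
    then show ?thesis by blast
  qed
  have gen: "generates (?f ` m)"
    unfolding generates_def
  proof (intro allI impI)
    fix S assume S: "is_subalgebra S \<and> ?f ` m \<subseteq> S"
    have "is_subalgebra (?g ` S)"
      using S unfolding is_subalgebra_def
      by (auto simp: linear_subspace_image[OF glin] ghom[symmetric])
    moreover have "m \<subseteq> ?g ` S"
    proof
      fix x assume "x \<in> m"
      then have "?f x \<in> S" using S by blast
      then show "x \<in> ?g ` S" using gf[of x] by (metis image_eqI)
    qed
    ultimately have gS: "?g ` S = UNIV" using g unfolding good_def generates_def by blast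
    show "S = UNIV"
    proof (rule set_eqI, rule iffI)
      fix z assume "z \<in> (UNIV :: (real^6) set)"
      have "?g z \<in> ?g ` S" using gS by simp
      then obtain s where "s \<in> S" "?g s = ?g z" by auto
      then have "s = z" using fg by metis
      then show "z \<in> S" using \<open>s \<in> S\<close> by simp
    qed simp
  qed
  have inv: "\<forall>x\<in>?f ` h. \<forall>y\<in>?f ` m. lie_br x y \<in> ?f ` m"
    using g unfolding good_def by (auto simp: hom[symmetric])
  show ?thesis unfolding good_def using sub dh sm dm int sum gen inv by blast
qed

definition disc :: "real^6 \<Rightarrow> real" where "disc v = v$4^2 - v$2^2 - v$3^2"

lemma disc_M3: "mK a b c d p q r ^ 2 - mH a b c d p q r ^ 2 - mS a b c d p q r ^ 2 = (a*d-b*c)^2 * (r^2 - p^2 - q^2)"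
  unfolding mH_def mS_def mK_def by (simp add: field_simps power2_eq_square; algebra)

lemma disc_Ad: "det A = 1 \<Longrightarrow> trace X = 0 \<Longrightarrow> disc (Ad A X v) = disc v"
  by (simp add: Ad_eq disc_def AdA_def mk_def M3_def U6_def W6_def disc_M3[simplified] det_2 xi_def)

definition NF :: "(real^6) set \<Rightarrow> (real^6) set \<Rightarrow> bool" where
 "NF h m \<longleftrightarrow> ((\<exists>b2 b3. h = span {e 1, e 2, e 6} \<and>
        m = span {e 5, e 3 - b3 *\<^sub>R e 1 - b2 *\<^sub>R e 6, e 4 + b2 *\<^sub>R e 1 + b3 *\<^sub>R e 6})
     \<or> (\<exists>a. a \<noteq> 0 \<and> h = span {e 2, e 3, e 4} \<and>
        m = span {e 1 + a *\<^sub>R e 4, e 6 - a *\<^sub>R e 3, e 5 + a *\<^sub>R e 2})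
     \<or> (\<exists>b1 b2. h = span {e 4, e 5, e 6} \<and>
        m = span {e 1, e 2 + b1 *\<^sub>R e 6 + b2 *\<^sub>R e 5, e 3 - b2 *\<^sub>R e 6 + b1 *\<^sub>R e 5}))"

definition Goal :: "(real^6) set \<Rightarrow> (real^6) set \<Rightarrow> bool" where
 "Goal h m \<longleftrightarrow> (\<exists>A X. det A = 1 \<and> trace X = 0 \<and> NF (Ad A X ` h) (Ad A X ` m))"

lemma Goal_NF: "NF h m \<Longrightarrow> Goal h m"
  unfolding Goal_def
  apply (rule exI[of _ "mat 1"], rule exI[of _ "xinv 0"])
  by (simp add: Ad_id xinv det_I)

lemma wlog:
  assumes A: "det A = 1" "trace X = 0" and G: "Goal (Ad A X ` h) (Ad A X ` m)"
  shows "Goal h m"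
proof -
  obtain B Y where B: "det B = 1" "trace Y = 0" and N: "NF (Ad B Y ` Ad A X ` h) (Ad B Y ` Ad A X ` m)"
    using G unfolding Goal_def by blast
  let ?Z = "xinv (xi X + AdA (adj2 A) (xi Y))"
  have eq: "\<And>S. Ad B Y ` Ad A X ` S = Ad (B ** A) ?Z ` S"
    using Ad_comp[OF A B] by (simp add: image_image)
  have "det (B ** A) = 1" using A B by (simp add: det_mul)
  moreover have "trace ?Z = 0" by (simp add: xinv)
  ultimately show ?thesis unfolding Goal_def using N eq by metis
qed


lemma zero3[simp]: "vector [0,0,0] = (0::real^3)" by (simp add: vec3_eq)

lemma U6_Ad: "det A = 1 \<Longrightarrow> trace X = 0 \<Longrightarrow> U6 (Ad A X v) = M3 A (U6 v)"
  by (simp add: Ad_eq AdA_def U6_add lie_U6_V xi_V br3_def vec3_eq)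

lemma U6_e: "U6 (k *\<^sub>R e 2) = vector [k, 0, 0]" "U6 (k *\<^sub>R e 4) = vector [0, 0, k]"
   "U6 (k *\<^sub>R (e 3 + e 4)) = vector [0, k, k]"
  by (simp_all add: U6_def vec3_eq)

lemma N1h:
  assumes "disc x < 0"
  shows "\<exists>A \<mu>. det A = 1 \<and> \<mu> \<noteq> 0 \<and> M3 A (U6 x) = vector [\<mu>, 0, 0]"
proof -
  define p where "p = x$2"
  define q where "q = x$3 + x$4"
  define r where "r = x$3 - x$4"
  have pos: "p^2 + q*r > 0" using assms by (simp add: disc_def p_def q_def r_def algebra_simps power2_eq_square)
  define l where "l = sqrt (p^2 + q*r)"
  have l: "l > 0" "l * l = p^2 + q*r" using pos by (simp_all add: l_def)
  have x3: "x$3 = (q + r)/2" and x4: "x$4 = (q - r)/2" and x2: "x$2 = p" by (simp_all add: q_def r_def p_def)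
  show ?thesis
  proof (cases "r = 0")
    case False
    let ?A = "mat2 r (l - p) (-1/(2*l)) ((l+p)/(2*l*r))"
    have "det ?A = 1" using False l by (simp add: det_2 field_simps)
    moreover have "M3 ?A (U6 x) = vector [l, 0, 0]"
      using False l unfolding vec3_eq M3_def U6_def
      by (simp add: x2 x3 x4 mH_def mS_def mK_def field_simps power2_eq_square; algebra)
    ultimately show ?thesis using l by (metis less_irrefl)
  next
    case True
    then have p0: "p \<noteq> 0" using pos by auto
    let ?A = "mat2 1 (q/(2*p)) 0 1"
    have "det ?A = 1" by (simp add: det_2)
    moreover have "M3 ?A (U6 x) = vector [p, 0, 0]"
      using True p0 unfolding vec3_eq M3_def U6_def
      by (simp add: x2 x3 x4 mH_def mS_def mK_def field_simps power2_eq_square; algebra)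
    ultimately show ?thesis using p0 by blast
  qed
qed

lemma N1e:
  assumes "disc x > 0"
  shows "\<exists>A \<mu>. det A = 1 \<and> \<mu> \<noteq> 0 \<and> M3 A (U6 x) = vector [0, 0, \<mu>]"
proof -
  define p where "p = x$2"
  define q where "q = x$3 + x$4"
  define r where "r = x$3 - x$4"
  have neg: "-(p^2 + q*r) > 0" using assms by (simp add: disc_def p_def q_def r_def algebra_simps power2_eq_square)
  define w where "w = sqrt (-(p^2 + q*r))"
  have w: "w > 0" "w * w = -(p^2 + q*r)" using neg by (simp_all add: w_def)
  have x3: "x$3 = (q + r)/2" and x4: "x$4 = (q - r)/2" and x2: "x$2 = p" by (simp_all add: q_def r_def p_def)
  have q0: "q \<noteq> 0" using neg by (auto simp: power2_eq_square)
  show ?thesis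
  proof (cases "q > 0")
    case True
    define s where "s = sqrt (w / q)"
    have s: "s > 0" "s * s = w / q" using w True by (simp_all add: s_def)
    let ?A = "mat2 s 0 ((p/q)/s) (1/s)"
    have "det ?A = 1" using s by (simp add: det_2)
    moreover have "M3 ?A (U6 x) = vector [0, 0, w]"
      using q0 s w unfolding vec3_eq M3_def U6_def
      by (simp add: x2 x3 x4 mH_def mS_def mK_def field_simps power2_eq_square; algebra)
    ultimately show ?thesis using w by (metis less_irrefl)
  next
    case False
    then have qn: "q < 0" using q0 by simp
    define s where "s = sqrt (- w / q)"
    have s: "s > 0" "s * s = - w / q" using w qn by (simp_all add: s_def divide_pos_neg)
    let ?A = "mat2 s 0 ((p/q)/s) (1/s)"
    have "det ?A = 1" using s by (simp add: det_2)
    moreover have "M3 ?A (U6 x) = vector [0, 0, -w]"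
      using q0 s w unfolding vec3_eq M3_def U6_def
      by (simp add: x2 x3 x4 mH_def mS_def mK_def field_simps power2_eq_square; algebra)
    ultimately show ?thesis using w by (metis neg_0_equal_iff_equal less_irrefl)
  qed
qed

lemma N1n:
  assumes "disc x = 0" "U6 x \<noteq> 0"
  shows "\<exists>A \<mu>. det A = 1 \<and> \<mu> \<noteq> 0 \<and> M3 A (U6 x) = vector [0, \<mu>, \<mu>]"
proof -
  define p where "p = x$2"
  define q where "q = x$3 + x$4"
  define r where "r = x$3 - x$4"
  have z: "p^2 + q*r = 0" using assms by (simp add: disc_def p_def q_def r_def algebra_simps power2_eq_square)
  have x3: "x$3 = (q + r)/2" and x4: "x$4 = (q - r)/2" and x2: "x$2 = p" by (simp_all add: q_def r_def p_def)
  show ?thesis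
  proof (cases "q = 0")
    case False
    let ?A = "mat2 1 0 (p/q) 1"
    have "det ?A = 1" by (simp add: det_2)
    moreover have "M3 ?A (U6 x) = vector [0, q/2, q/2]"
      using False z unfolding vec3_eq M3_def U6_def
      by (simp add: x2 x3 x4 mH_def mS_def mK_def field_simps power2_eq_square; algebra)
    moreover have "q/2 \<noteq> 0" using False by simp
    ultimately show ?thesis by blast
  next
    case True
    then have p0: "p = 0" using z by simp
    have r0: "r \<noteq> 0" using assms(2) True p0 x2 x3 x4 by (auto simp: U6_def vec3_eq)
    let ?A = "mat2 0 1 (-1) 0"
    have "det ?A = 1" by (simp add: det_2)
    moreover have "M3 ?A (U6 x) = vector [0, -r/2, -r/2]"
      using True p0 unfolding vec3_eq M3_def U6_def
      by (simp add: x2 x3 x4 mH_def mS_def mK_def field_simps power2_eq_square)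
    moreover have "-r/2 \<noteq> 0" using r0 by simp
    ultimately show ?thesis by blast
  qed
qed

lemma Ad1: "U6 w = 0 \<Longrightarrow> Ad (mat 1) (xinv w) v = v + lie_br w v"
  by (simp add: Ad_eq det_I xinv AdA_id)

lemma N2h:
  assumes "U6 v = vector [\<mu>, 0, 0]" "\<mu> \<noteq> 0"
  shows "\<exists>X c. trace X = 0 \<and> Ad (mat 1) X v = \<mu> *\<^sub>R (e 2 + c *\<^sub>R e 5)"
proof -
  let ?w = "v6 (- v$6/\<mu>) 0 0 0 0 (- v$1/\<mu>)"
  have w: "U6 ?w = 0" by (simp add: U6_def vec3_eq)
  have "v + lie_br ?w v = \<mu> *\<^sub>R (e 2 + (v$5/\<mu>) *\<^sub>R e 5)"
    using assms by (simp add: vec6_eq U6_def vec3_eq field_simps)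
  then show ?thesis using Ad1[OF w] xinv(2) by metis
qed

lemma N2e:
  assumes "U6 v = vector [0, 0, \<mu>]" "\<mu> \<noteq> 0"
  shows "\<exists>X c. trace X = 0 \<and> Ad (mat 1) X v = \<mu> *\<^sub>R (e 4 + c *\<^sub>R e 1)"
proof -
  let ?w = "v6 0 0 0 0 (v$6/\<mu>) (- v$5/\<mu>)"
  have w: "U6 ?w = 0" by (simp add: U6_def vec3_eq)
  have "v + lie_br ?w v = \<mu> *\<^sub>R (e 4 + (v$1/\<mu>) *\<^sub>R e 1)"
    using assms by (simp add: vec6_eq U6_def vec3_eq field_simps)
  then show ?thesis using Ad1[OF w] xinv(2) by metis
qed

lemma N2n:
  assumes "U6 v = vector [0, \<mu>, \<mu>]" "\<mu> \<noteq> 0"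
  shows "\<exists>X c. trace X = 0 \<and> Ad (mat 1) X v = \<mu> *\<^sub>R (e 3 + e 4 + c *\<^sub>R (e 1 + e 6))"
proof -
  let ?w = "v6 (- v$5/\<mu>) 0 0 0 (-(v$1 - v$6)/(2*\<mu>)) 0"
  have w: "U6 ?w = 0" by (simp add: U6_def vec3_eq)
  have "v + lie_br ?w v = \<mu> *\<^sub>R (e 3 + e 4 + ((v$1 + v$6)/(2*\<mu>)) *\<^sub>R (e 1 + e 6))"
    using assms by (simp add: vec6_eq U6_def vec3_eq field_simps)
  then show ?thesis using Ad1[OF w] xinv(2) by metis
qed


lemma inner6: "(x::real^6) \<bullet> y = x$1*y$1 + x$2*y$2 + x$3*y$3 + x$4*y$4 + x$5*y$5 + x$6*y$6"
  by (simp add: inner_vec_def sum6)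

lemma notin_span_inner:
  assumes "\<forall>s\<in>S. c \<bullet> s = 0" "c \<bullet> a \<noteq> (0::real)"
  shows "a \<notin> span S"
proof
  assume "a \<in> span S"
  moreover have "span S \<subseteq> {x. c \<bullet> x = 0}"
    using assms(1) by (intro span_minimal subspace_hyperplane) auto
  ultimately show False using assms(2) by auto
qed

lemma indep_ins:
  assumes "independent S" "\<forall>s\<in>S. c \<bullet> s = 0" "c \<bullet> a \<noteq> (0::real)"
  shows "independent (insert a S) \<and> a \<notin> S"
  using notin_span_inner[OF assms(2,3)] independent_insertI[OF _ assms(1)] span_base by blast

lemma four_contra:
  fixes a1 a2 a3 a4 c1 c2 c3 c4 :: "real^6"
  assumes h: "dim h = 3" "a1 \<in> h" "a2 \<in> h" "a3 \<in> h" "a4 \<in> h"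
    and c: "c1 \<bullet> a1 \<noteq> 0"
      "c2 \<bullet> a1 = 0" "c2 \<bullet> a2 \<noteq> 0"
      "c3 \<bullet> a1 = 0" "c3 \<bullet> a2 = 0" "c3 \<bullet> a3 \<noteq> 0"
      "c4 \<bullet> a1 = 0" "c4 \<bullet> a2 = 0" "c4 \<bullet> a3 = 0" "c4 \<bullet> a4 \<noteq> 0"
  shows False
proof -
  have i1: "independent {a1}" using c(1) by (auto simp: independent_insert)
  have i2: "independent {a2, a1} \<and> a2 \<notin> {a1}" using indep_ins[OF i1, of c2 a2] c by auto
  have i3: "independent {a3, a2, a1} \<and> a3 \<notin> {a2, a1}" using indep_ins[of "{a2,a1}" c3 a3] i2 c by auto
  have i4: "independent {a4, a3, a2, a1} \<and> a4 \<notin> {a3, a2, a1}" using indep_ins[of "{a3,a2,a1}" c4 a4] i3 c by auto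
  have "card {a4, a3, a2, a1} = 4" using i2 i3 i4 by auto
  moreover have "card {a4, a3, a2, a1} \<le> dim h"
    using independent_card_le_dim[of "{a4,a3,a2,a1}" h] i4 h by auto
  ultimately show False using h by simp
qed

lemma three_eq:
  fixes a1 a2 a3 :: "real^6"
  assumes "subspace h" "dim h = 3" "h \<subseteq> span {a1, a2, a3}"
  shows "h = span {a1, a2, a3}"
proof -
  have "dim (span {a1,a2,a3}) \<le> 3"
  proof -
    have "card {a1,a2,a3} \<le> 3" by (auto simp: card_insert_if)
    moreover have "dim (span {a1,a2,a3}) \<le> card {a1,a2,a3}" by (rule dim_le_card) auto
    ultimately show ?thesis by linarith
  qed
  then have "span h = span (span {a1,a2,a3})"
    using dim_eq_span[of h "span {a1,a2,a3}"] assms by simp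
  moreover have "span h = h" using assms(1) span_eq_iff by blast
  ultimately show ?thesis by (simp add: span_span)
qed

lemma two_contra:
  fixes a1 a2 :: "real^6"
  assumes "dim h = 3" "h \<subseteq> span {a1, a2}"
  shows False
proof -
  have "dim h \<le> card {a1, a2}" using dim_le_card[OF assms(2)] by simp
  also have "\<dots> \<le> 2" by (auto simp: card_insert_if)
  finally show False using assms(1) by simp
qed


lemma good_sub: "good h m \<Longrightarrow> subspace h" by (simp add: good_def is_subalgebra_def)
lemma good_subm: "good h m \<Longrightarrow> subspace m" by (simp add: good_def)
lemma good_dec: "good h m \<Longrightarrow> \<exists>a b. a \<in> h \<and> b \<in> m \<and> x = a + b"
proof -
  assume "good h m"
  then have "x \<in> {x + y | x y. x \<in> h \<and> y \<in> m}" unfolding good_def by simp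
  then show ?thesis by blast
qed
lemma good_int: "good h m \<Longrightarrow> a \<in> h \<Longrightarrow> a \<in> m \<Longrightarrow> a = 0"
  unfolding good_def by blast
lemma good_hm: "good h m \<Longrightarrow> x \<in> h \<Longrightarrow> y \<in> m \<Longrightarrow> lie_br x y \<in> m"
  unfolding good_def by blast
lemma good_hh: "good h m \<Longrightarrow> x \<in> h \<Longrightarrow> y \<in> h \<Longrightarrow> lie_br x y \<in> h"
  unfolding good_def is_subalgebra_def by blast
lemma good_dimh: "good h m \<Longrightarrow> dim h = 3" by (simp add: good_def)
lemma good_dimm: "good h m \<Longrightarrow> dim m = 3" by (simp add: good_def)
lemma good_gen: "good h m \<Longrightarrow> is_subalgebra m \<Longrightarrow> False"
proof -
  assume g: "good h m" and s: "is_subalgebra m"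
  then have "m = UNIV" unfolding good_def generates_def by blast
  then have "h \<subseteq> m" by simp
  then have "h \<subseteq> {0}" using g unfolding good_def by blast
  then have "h \<subseteq> span {}" by simp
  then have "dim h \<le> card ({}::(real^6) set)" using dim_le_card[of h "{}"] by simp
  moreover have "dim h = 3" using g by (simp add: good_def)
  ultimately show False by simp
qed

lemma span3_coord:
  assumes "i \<noteq> j" "i \<noteq> k" "j \<noteq> k"
  shows "span {e i, e j, e k} = {x. \<forall>l. l \<noteq> i \<and> l \<noteq> j \<and> l \<noteq> k \<longrightarrow> x$l = 0}"
proof
  have "subspace {x::real^6. \<forall>l. l \<noteq> i \<and> l \<noteq> j \<and> l \<noteq> k \<longrightarrow> x$l = 0}"
    by (auto simp: subspace_def)
  then show "span {e i, e j, e k} \<subseteq> {x. \<forall>l. l \<noteq> i \<and> l \<noteq> j \<and> l \<noteq> k \<longrightarrow> x$l = 0}"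
    by (rule span_minimal[rotated]) auto
next
  show "{x. \<forall>l. l \<noteq> i \<and> l \<noteq> j \<and> l \<noteq> k \<longrightarrow> x$l = 0} \<subseteq> span {e i, e j, e k}"
  proof
    fix x :: "real^6" assume x: "x \<in> {x. \<forall>l. l \<noteq> i \<and> l \<noteq> j \<and> l \<noteq> k \<longrightarrow> x$l = 0}"
    have "x = x$i *\<^sub>R e i + x$j *\<^sub>R e j + x$k *\<^sub>R e k"
      using x assms by (auto simp: vec_eq_iff)
    also have "\<dots> \<in> span {e i, e j, e k}"
      by (intro span_add span_scale span_base) auto
    finally show "x \<in> span {e i, e j, e k}" .
  qed
qed

lemma S126: "span {e 1, e 2, e 6} = {x. x$3 = 0 \<and> x$4 = 0 \<and> x$5 = 0}"
  by (subst span3_coord) (simp_all add: forall6)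
lemma S234: "span {e 2, e 3, e 4} = {x. x$1 = 0 \<and> x$5 = 0 \<and> x$6 = 0}"
  by (subst span3_coord) (simp_all add: forall6)
lemma S456: "span {e 4, e 5, e 6} = {x. x$1 = 0 \<and> x$2 = 0 \<and> x$3 = 0}"
  by (subst span3_coord) (simp_all add: forall6)


lemma comp_of: "(x::real^6) = a + b \<Longrightarrow> x$k = a$k + b$k" by simp

lemma caseI:
  assumes g: "good h m" and hI: "h = span {e 1, e 2, e 6}"
  shows "NF h m"
proof -
  have hc: "\<And>x. x \<in> h \<longleftrightarrow> x$3 = 0 \<and> x$4 = 0 \<and> x$5 = 0" using hI S126 by auto
  have z: "\<And>x. x \<in> m \<Longrightarrow> x$3 = 0 \<Longrightarrow> x$4 = 0 \<Longrightarrow> x$5 = 0 \<Longrightarrow> x = 0"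
    using good_int[OF g] hc by blast
  have sm: "subspace m" using good_subm[OF g] .
  have e1h: "e 1 \<in> h" and e2h: "e 2 \<in> h" using hc by auto
  obtain a5 b5 where ab5: "a5 \<in> h" "b5 \<in> m" "e 5 = a5 + b5" using good_dec[OF g] by blast
  have b5c: "b5$3 = 0" "b5$4 = 0" "b5$5 = 1"
    using comp_of[OF ab5(3), of 3] comp_of[OF ab5(3), of 4] comp_of[OF ab5(3), of 5] hc ab5(1) by auto
  have "lie_br (e 2) b5 = 0" by (rule z[OF good_hm[OF g e2h ab5(2)]]) (simp_all add: b5c)
  then have b5a: "b5$6 = 0" "b5$1 = 0" using b5c by (simp_all add: vec6_eq)
  have "lie_br (e 1) b5 = 0" by (rule z[OF good_hm[OF g e1h ab5(2)]]) (simp_all add: b5c)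
  then have b5b: "b5$2 = 0" using b5c by (simp add: vec6_eq)
  have "b5 = e 5" using b5a b5b b5c by (simp add: vec6_eq)
  then have e5m: "e 5 \<in> m" using ab5(2) by simp
  obtain a3 b3 where ab3: "a3 \<in> h" "b3 \<in> m" "e 3 = a3 + b3" using good_dec[OF g] by blast
  have b3c: "b3$3 = 1" "b3$4 = 0" "b3$5 = 0"
    using comp_of[OF ab3(3), of 3] comp_of[OF ab3(3), of 4] comp_of[OF ab3(3), of 5] hc ab3(1) by auto
  obtain a4 b4 where ab4: "a4 \<in> h" "b4 \<in> m" "e 4 = a4 + b4" using good_dec[OF g] by blast
  have b4c: "b4$3 = 0" "b4$4 = 1" "b4$5 = 0"
    using comp_of[OF ab4(3), of 3] comp_of[OF ab4(3), of 4] comp_of[OF ab4(3), of 5] hc ab4(1) by auto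
  have "lie_br (e 2) b3 - b4 \<in> m" using good_hm[OF g e2h ab3(2)] ab4(2) sm subspace_diff by blast
  then have "lie_br (e 2) b3 - b4 = 0" by (rule z) (simp_all add: b3c b4c)
  then have r1: "b4$1 = - b3$6" "b4$2 = 0" "b4$6 = - b3$1" by (simp_all add: vec6_eq)
  have "lie_br (e 2) b4 - b3 \<in> m" using good_hm[OF g e2h ab4(2)] ab3(2) sm subspace_diff by blast
  then have "lie_br (e 2) b4 - b3 = 0" by (rule z) (simp_all add: b3c b4c)
  then have r2: "b3$2 = 0" by (simp_all add: vec6_eq)
  define \<beta>2 where "\<beta>2 = - b3$6"
  define \<beta>3 where "\<beta>3 = - b3$1"
  have b3e: "b3 = e 3 - \<beta>3 *\<^sub>R e 1 - \<beta>2 *\<^sub>R e 6"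
    using b3c r2 by (simp add: vec6_eq \<beta>2_def \<beta>3_def)
  have b4e: "b4 = e 4 + \<beta>2 *\<^sub>R e 1 + \<beta>3 *\<^sub>R e 6"
    using b4c r1 by (simp add: vec6_eq \<beta>2_def \<beta>3_def)
  have "m \<subseteq> span {e 5, b3, b4}"
  proof
    fix x assume xm: "x \<in> m"
    have "x - x$3 *\<^sub>R b3 - x$4 *\<^sub>R b4 - x$5 *\<^sub>R e 5 \<in> m"
      using xm ab3(2) ab4(2) e5m sm by (intro subspace_diff subspace_scale) auto
    then have "x - x$3 *\<^sub>R b3 - x$4 *\<^sub>R b4 - x$5 *\<^sub>R e 5 = 0" by (rule z) (simp_all add: b3c b4c)
    then have "x = x$5 *\<^sub>R e 5 + x$3 *\<^sub>R b3 + x$4 *\<^sub>R b4" by (simp add: algebra_simps)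
    also have "\<dots> \<in> span {e 5, b3, b4}" by (intro span_add span_scale span_base) auto
    finally show "x \<in> span {e 5, b3, b4}" .
  qed
  then have "m = span {e 5, b3, b4}" using three_eq sm good_dimm[OF g] by blast
  then show ?thesis unfolding NF_def using hI b3e b4e by blast
qed




lemma S156: "span {e 1, e 5, e 6} = {x. x$2 = 0 \<and> x$3 = 0 \<and> x$4 = 0}"
  by (subst span3_coord) (simp_all add: forall6)

lemma V_subalg: "is_subalgebra (span {e 1, e 5, e 6})"
  unfolding is_subalgebra_def S156
  by (auto simp: subspace_def)

lemma caseII:
  assumes g: "good h m" and hI: "h = span {e 2, e 3, e 4}"
  shows "NF h m"
proof -
  have hc: "\<And>x. x \<in> h \<longleftrightarrow> x$1 = 0 \<and> x$5 = 0 \<and> x$6 = 0" using hI S234 by auto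
  have z: "\<And>x. x \<in> m \<Longrightarrow> x$1 = 0 \<Longrightarrow> x$5 = 0 \<Longrightarrow> x$6 = 0 \<Longrightarrow> x = 0"
    using good_int[OF g] hc by blast
  have sm: "subspace m" using good_subm[OF g] .
  have eh: "e 2 \<in> h" "e 3 \<in> h" "e 4 \<in> h" using hc by auto
  obtain a1 b1 where ab1: "a1 \<in> h" "b1 \<in> m" "e 1 = a1 + b1" using good_dec[OF g] by blast
  have b1c: "b1$1 = 1" "b1$5 = 0" "b1$6 = 0"
    using comp_of[OF ab1(3), of 1] comp_of[OF ab1(3), of 5] comp_of[OF ab1(3), of 6] hc ab1(1) by auto
  obtain a5 b5 where ab5: "a5 \<in> h" "b5 \<in> m" "e 5 = a5 + b5" using good_dec[OF g] by blast
  have b5c: "b5$1 = 0" "b5$5 = 1" "b5$6 = 0"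
    using comp_of[OF ab5(3), of 1] comp_of[OF ab5(3), of 5] comp_of[OF ab5(3), of 6] hc ab5(1) by auto
  obtain a6 b6 where ab6: "a6 \<in> h" "b6 \<in> m" "e 6 = a6 + b6" using good_dec[OF g] by blast
  have b6c: "b6$1 = 0" "b6$5 = 0" "b6$6 = 1"
    using comp_of[OF ab6(3), of 1] comp_of[OF ab6(3), of 5] comp_of[OF ab6(3), of 6] hc ab6(1) by auto
  have key: "\<And>y b. y \<in> h \<Longrightarrow> b \<in> m \<Longrightarrow>
     lie_br y b - (lie_br y b)$1 *\<^sub>R b1 - (lie_br y b)$5 *\<^sub>R b5 - (lie_br y b)$6 *\<^sub>R b6 = 0"
  proof -
    fix y b assume "y \<in> h" "b \<in> m"
    then have "lie_br y b - (lie_br y b)$1 *\<^sub>R b1 - (lie_br y b)$5 *\<^sub>R b5 - (lie_br y b)$6 *\<^sub>R b6 \<in> m"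
      using good_hm[OF g] ab1(2) ab5(2) ab6(2) sm by (intro subspace_diff subspace_scale) auto
    then show "lie_br y b - (lie_br y b)$1 *\<^sub>R b1 - (lie_br y b)$5 *\<^sub>R b5 - (lie_br y b)$6 *\<^sub>R b6 = 0"
      by (rule z) (simp_all add: b1c b5c b6c)
  qed
  have E1: "b6$2 = 0" "b1$4 + b6$3 = 0"
    using key[OF eh(1) ab1(2)] b1c b5c b6c unfolding vec6_eq by (simp_all add: algebra_simps)
  have E2: "b5$2 = b1$4" "b5$3 = 0"
    using key[OF eh(2) ab1(2)] b1c b5c b6c unfolding vec6_eq by (simp_all add: algebra_simps)
  have E3: "b5$4 = 0" using key[OF eh(1) ab5(2)] b1c b5c b6c unfolding vec6_eq by (simp_all add: algebra_simps)
  have E4: "b6$4 = 0" using key[OF eh(2) ab6(2)] b1c b5c b6c unfolding vec6_eq by (simp_all add: algebra_simps)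
  have E5: "b1$3 = 0" "b1$2 = 0" using key[OF eh(3) ab1(2)] b1c b5c b6c unfolding vec6_eq by (simp_all add: algebra_simps)
  define a where "a = b1$4"
  have b1e: "b1 = e 1 + a *\<^sub>R e 4" using b1c E5 by (simp add: vec6_eq a_def)
  have b5e: "b5 = e 5 + a *\<^sub>R e 2" using b5c E2 E3 by (simp add: vec6_eq a_def)
  have b6e: "b6 = e 6 - a *\<^sub>R e 3" using b6c E1 E4 by (simp add: vec6_eq a_def algebra_simps)
  have "m \<subseteq> span {b1, b6, b5}"
  proof
    fix x assume xm: "x \<in> m"
    have "x - x$1 *\<^sub>R b1 - x$6 *\<^sub>R b6 - x$5 *\<^sub>R b5 \<in> m"
      using xm ab1(2) ab5(2) ab6(2) sm by (intro subspace_diff subspace_scale) auto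
    then have "x - x$1 *\<^sub>R b1 - x$6 *\<^sub>R b6 - x$5 *\<^sub>R b5 = 0" by (rule z) (simp_all add: b1c b5c b6c)
    then have "x = x$1 *\<^sub>R b1 + x$6 *\<^sub>R b6 + x$5 *\<^sub>R b5" by (simp add: algebra_simps)
    also have "\<dots> \<in> span {b1, b6, b5}" by (intro span_add span_scale span_base) auto
    finally show "x \<in> span {b1, b6, b5}" .
  qed
  then have mI: "m = span {b1, b6, b5}" using three_eq sm good_dimm[OF g] by blast
  have "a \<noteq> 0"
  proof
    assume "a = 0"
    then have "m = span {e 1, e 5, e 6}" using mI b1e b5e b6e by (simp add: insert_commute)
    then show False using good_gen[OF g] V_subalg by simp
  qed
  then show ?thesis unfolding NF_def using hI mI b1e b5e b6e by blast
qed

lemma caseIII: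
  assumes g: "good h m" and hI: "h = span {e 4, e 5, e 6}"
  shows "NF h m"
proof -
  have hc: "\<And>x. x \<in> h \<longleftrightarrow> x$1 = 0 \<and> x$2 = 0 \<and> x$3 = 0" using hI S456 by auto
  have z: "\<And>x. x \<in> m \<Longrightarrow> x$1 = 0 \<Longrightarrow> x$2 = 0 \<Longrightarrow> x$3 = 0 \<Longrightarrow> x = 0"
    using good_int[OF g] hc by blast
  have sm: "subspace m" using good_subm[OF g] .
  have eh: "e 4 \<in> h" "e 5 \<in> h" "e 6 \<in> h" using hc by auto
  obtain a1 b1 where ab1: "a1 \<in> h" "b1 \<in> m" "e 1 = a1 + b1" using good_dec[OF g] by blast
  have b1c: "b1$1 = 1" "b1$2 = 0" "b1$3 = 0"
    using comp_of[OF ab1(3), of 1] comp_of[OF ab1(3), of 2] comp_of[OF ab1(3), of 3] hc ab1(1) by auto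
  obtain a2 b2 where ab2: "a2 \<in> h" "b2 \<in> m" "e 2 = a2 + b2" using good_dec[OF g] by blast
  have b2c: "b2$1 = 0" "b2$2 = 1" "b2$3 = 0"
    using comp_of[OF ab2(3), of 1] comp_of[OF ab2(3), of 2] comp_of[OF ab2(3), of 3] hc ab2(1) by auto
  obtain a3 b3 where ab3: "a3 \<in> h" "b3 \<in> m" "e 3 = a3 + b3" using good_dec[OF g] by blast
  have b3c: "b3$1 = 0" "b3$2 = 0" "b3$3 = 1"
    using comp_of[OF ab3(3), of 1] comp_of[OF ab3(3), of 2] comp_of[OF ab3(3), of 3] hc ab3(1) by auto
  have key: "\<And>y b. y \<in> h \<Longrightarrow> b \<in> m \<Longrightarrow>
     lie_br y b - (lie_br y b)$1 *\<^sub>R b1 - (lie_br y b)$2 *\<^sub>R b2 - (lie_br y b)$3 *\<^sub>R b3 = 0"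
  proof -
    fix y b assume "y \<in> h" "b \<in> m"
    then have "lie_br y b - (lie_br y b)$1 *\<^sub>R b1 - (lie_br y b)$2 *\<^sub>R b2 - (lie_br y b)$3 *\<^sub>R b3 \<in> m"
      using good_hm[OF g] ab1(2) ab2(2) ab3(2) sm by (intro subspace_diff subspace_scale) auto
    then show "lie_br y b - (lie_br y b)$1 *\<^sub>R b1 - (lie_br y b)$2 *\<^sub>R b2 - (lie_br y b)$3 *\<^sub>R b3 = 0"
      by (rule z) (simp_all add: b1c b2c b3c)
  qed
  have E1: "b1$6 = 0" "b1$5 = 0"
    using key[OF eh(1) ab1(2)] b1c b2c b3c unfolding vec6_eq by (simp_all add: algebra_simps)
  have E2: "b1$4 = 0" using key[OF eh(2) ab1(2)] b1c b2c b3c unfolding vec6_eq by (simp_all add: algebra_simps)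
  have E3: "b3$4 = 0" "b3$5 = b2$6" "b3$6 = - b2$5"
    using key[OF eh(1) ab2(2)] b1c b2c b3c unfolding vec6_eq by (simp_all add: algebra_simps)
  have E4: "b2$4 = 0" using key[OF eh(2) ab2(2)] b1c b2c b3c unfolding vec6_eq by (simp_all add: algebra_simps)
  define c1 where "c1 = b2$6"
  define c2 where "c2 = b2$5"
  have b1e: "b1 = e 1" using b1c E1 E2 by (simp add: vec6_eq)
  have b2e: "b2 = e 2 + c1 *\<^sub>R e 6 + c2 *\<^sub>R e 5" using b2c E4 by (simp add: vec6_eq c1_def c2_def)
  have b3e: "b3 = e 3 - c2 *\<^sub>R e 6 + c1 *\<^sub>R e 5" using b3c E3 by (simp add: vec6_eq c1_def c2_def)
  have "m \<subseteq> span {b1, b2, b3}"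
  proof
    fix x assume xm: "x \<in> m"
    have "x - x$1 *\<^sub>R b1 - x$2 *\<^sub>R b2 - x$3 *\<^sub>R b3 \<in> m"
      using xm ab1(2) ab2(2) ab3(2) sm by (intro subspace_diff subspace_scale) auto
    then have "x - x$1 *\<^sub>R b1 - x$2 *\<^sub>R b2 - x$3 *\<^sub>R b3 = 0" by (rule z) (simp_all add: b1c b2c b3c)
    then have "x = x$1 *\<^sub>R b1 + x$2 *\<^sub>R b2 + x$3 *\<^sub>R b3" by (simp add: algebra_simps)
    also have "\<dots> \<in> span {b1, b2, b3}" by (intro span_add span_scale span_base) auto
    finally show "x \<in> span {b1, b2, b3}" .
  qed
  then have mI: "m = span {b1, b2, b3}" using three_eq sm good_dimm[OF g] by blast
  show ?thesis unfolding NF_def using hI mI b1e b2e b3e by blast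
qed


definition PP :: "real^6 \<Rightarrow> real^6" where
  "PP x = v6 ((x$1 - x$6)/2) 0 ((x$3 + x$4)/2) ((x$3 + x$4)/2) 0 (-(x$1 - x$6)/2)"
definition PM :: "real^6 \<Rightarrow> real^6" where
  "PM x = v6 ((x$1 + x$6)/2) 0 ((x$3 - x$4)/2) (-(x$3 - x$4)/2) 0 ((x$1 + x$6)/2)"

lemma D1: "lie_br (e 2 + c *\<^sub>R e 5) x = v6 (c*x$3 - x$6) 0 (x$4) (x$3) 0 (-x$1 - c*x$4)"
  by (simp add: vec6_eq)

lemma PP_poly:
  fixes c :: real
  defines "D \<equiv> \<lambda>x. lie_br (e 2 + c *\<^sub>R e 5) x"
  shows "PP x = (1/2) *\<^sub>R (2 *\<^sub>R D (D x) - D (D (D (D x)))) + (1/4) *\<^sub>R (3 *\<^sub>R D x - D (D (D x)))"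
  unfolding D_def D1 by (simp add: vec6_eq PP_def field_simps)

lemma PM_poly:
  fixes c :: real
  defines "D \<equiv> \<lambda>x. lie_br (e 2 + c *\<^sub>R e 5) x"
  shows "PM x = (1/2) *\<^sub>R (2 *\<^sub>R D (D x) - D (D (D (D x)))) - (1/4) *\<^sub>R (3 *\<^sub>R D x - D (D (D x)))"
  unfolding D_def D1 by (simp add: vec6_eq PM_def field_simps)

lemma closure_P:
  assumes S: "subspace S" and cl: "\<And>x. x \<in> S \<Longrightarrow> lie_br (e 2 + c *\<^sub>R e 5) x \<in> S" and x: "x \<in> S"
  shows "PP x \<in> S" "PM x \<in> S"
proof -
  let ?D = "\<lambda>x. lie_br (e 2 + c *\<^sub>R e 5) x"
  have d1: "?D x \<in> S" using cl x by blast
  have d2: "?D (?D x) \<in> S" using cl d1 by blast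
  have d3: "?D (?D (?D x)) \<in> S" using cl d2 by blast
  have d4: "?D (?D (?D (?D x))) \<in> S" using cl d3 by blast
  show "PP x \<in> S" unfolding PP_poly[of x c]
    using d1 d2 d3 d4 S by (intro subspace_add subspace_diff subspace_scale) auto
  show "PM x \<in> S" unfolding PM_poly[of x c]
    using d1 d2 d3 d4 S by (intro subspace_add subspace_diff subspace_scale) auto
qed

lemma blk:
  assumes g: "good h m" and p: "p \<noteq> 0" and a: "a \<in> h" and b: "b \<in> m" and q: "q = a + b"
    and aa: "a = \<alpha> *\<^sub>R q + \<beta> *\<^sub>R p" and ph: "\<alpha> *\<^sub>R p \<in> h" and pm: "(1 - \<alpha>) *\<^sub>R p \<in> m"
  shows "(p \<in> h \<and> q \<in> h) \<or> (p \<in> m \<and> q \<in> m)"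
proof -
  have sh: "subspace h" using good_sub[OF g] .
  have sm: "subspace m" using good_subm[OF g] .
  consider "\<alpha> = 1" | "\<alpha> = 0" | "\<alpha> \<noteq> 0 \<and> \<alpha> \<noteq> 1" by blast
  then show ?thesis
  proof cases
    case 1
    then have ph': "p \<in> h" using ph by simp
    have "b = q - a" using q by simp
    then have "b = - \<beta> *\<^sub>R p" using aa 1 by simp
    then have "b \<in> h" using ph' sh by (simp add: subspace_neg subspace_scale)
    then have "b = 0" using good_int[OF g] b by blast
    then show ?thesis using ph' q a by simp
  next
    case 2
    then have pm': "p \<in> m" using pm by simp
    have "a = \<beta> *\<^sub>R p" using aa 2 by simp
    then have "a \<in> m" using pm' sm by (simp add: subspace_scale)
    then have "a = 0" using good_int[OF g] a by blast
    then show ?thesis using pm' q b by simp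
  next
    case 3
    have "p \<in> h" using subspace_scale[OF sh ph, of "1/\<alpha>"] 3 by simp
    moreover have "p \<in> m" using subspace_scale[OF sm pm, of "1/(1-\<alpha>)"] 3 by simp
    ultimately have "p = 0" using good_int[OF g] by blast
    then show ?thesis using p by simp
  qed
qed

lemma three_indep:
  fixes a1 a2 a3 :: "real^6"
  assumes h: "subspace h" "dim h = 3" "a1 \<in> h" "a2 \<in> h" "a3 \<in> h"
    and c: "a1 \<bullet> a1 \<noteq> 0" "a2 \<bullet> a1 = 0" "a2 \<bullet> a2 \<noteq> 0" "a3 \<bullet> a1 = 0" "a3 \<bullet> a2 = 0" "a3 \<bullet> a3 \<noteq> 0"
  shows "h = span {a3, a2, a1}"
proof -
  have i1: "independent {a1}" using c(1) by (auto simp: independent_insert)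
  have i2: "independent {a2, a1} \<and> a2 \<notin> {a1}" using indep_ins[OF i1, of a2 a2] c by auto
  have i3: "independent {a3, a2, a1} \<and> a3 \<notin> {a2, a1}" using indep_ins[of "{a2,a1}" a3 a3] i2 c by auto
  have "card {a3, a2, a1} = 3" using i2 i3 by auto
  then have "h \<subseteq> span {a3, a2, a1}" using card_eq_dim[of "{a3,a2,a1}" h] i3 h by auto
  then show ?thesis using three_eq h by blast
qed

lemma PP0: "PP x = 0 \<Longrightarrow> x$6 = x$1 \<and> x$4 = - x$3"
proof -
  assume a: "PP x = 0"
  have "PP x $ 1 = 0" "PP x $ 3 = 0" using a by simp_all
  then show ?thesis unfolding PP_def by simp
qed

lemma PM0: "PM x = 0 \<Longrightarrow> x$6 = - x$1 \<and> x$4 = x$3"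
proof -
  assume a: "PM x = 0"
  have "PM x $ 1 = 0" "PM x $ 3 = 0" using a by simp_all
  then show ?thesis unfolding PM_def by simp
qed

lemma subalg_PP0:
  assumes S: "subspace S" and P: "\<And>x. x \<in> S \<Longrightarrow> PP x = 0" and p2: "e 1 + e 6 \<in> S" and q2: "e 3 - e 4 \<in> S"
  shows "is_subalgebra S"
  unfolding is_subalgebra_def
proof (intro conjI S ballI)
  fix x y assume xy: "x \<in> S" "y \<in> S"
  have cx: "x$6 = x$1" "x$4 = - x$3" using PP0[OF P[OF xy(1)]] by auto
  have cy: "y$6 = y$1" "y$4 = - y$3" using PP0[OF P[OF xy(2)]] by auto
  have "lie_br x y = (lie_br x y $ 1) *\<^sub>R (e 1 + e 6) + (lie_br x y $ 3) *\<^sub>R (e 3 - e 4)"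
    unfolding vec6_eq using cx cy by (simp add: algebra_simps)
  moreover have "(lie_br x y $ 1) *\<^sub>R (e 1 + e 6) + (lie_br x y $ 3) *\<^sub>R (e 3 - e 4) \<in> S"
    by (intro subspace_add[OF S] subspace_scale[OF S] p2 q2)
  ultimately show "lie_br x y \<in> S" by simp
qed

lemma subalg_PM0:
  assumes S: "subspace S" and P: "\<And>x. x \<in> S \<Longrightarrow> PM x = 0" and p1: "e 1 - e 6 \<in> S" and q1: "e 3 + e 4 \<in> S"
  shows "is_subalgebra S"
  unfolding is_subalgebra_def
proof (intro conjI S ballI)
  fix x y assume xy: "x \<in> S" "y \<in> S"
  have cx: "x$6 = - x$1" "x$4 = x$3" using PM0[OF P[OF xy(1)]] by auto
  have cy: "y$6 = - y$1" "y$4 = y$3" using PM0[OF P[OF xy(2)]] by auto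
  have "lie_br x y = (lie_br x y $ 1) *\<^sub>R (e 1 - e 6) + (lie_br x y $ 3) *\<^sub>R (e 3 + e 4)"
    unfolding vec6_eq using cx cy by (simp add: algebra_simps)
  moreover have "(lie_br x y $ 1) *\<^sub>R (e 1 - e 6) + (lie_br x y $ 3) *\<^sub>R (e 3 + e 4) \<in> S"
    by (intro subspace_add[OF S] subspace_scale[OF S] p1 q1)
  ultimately show "lie_br x y \<in> S" by simp
qed


lemma PP_add: "PP (x + y) = PP x + PP y" by (simp add: PP_def vec6_eq field_simps)
lemma PM_add: "PM (x + y) = PM x + PM y" by (simp add: PM_def vec6_eq field_simps)
lemma PP_form: "PP z = (PP z $ 1) *\<^sub>R (e 1 - e 6) + (PP z $ 3) *\<^sub>R (e 3 + e 4)"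
  by (simp add: PP_def vec6_eq field_simps)
lemma PM_form: "PM z = (PM z $ 1) *\<^sub>R (e 1 + e 6) + (PM z $ 3) *\<^sub>R (e 3 - e 4)"
  by (simp add: PM_def vec6_eq field_simps)
lemma PP_q: "PP (e 3 + e 4) = e 3 + e 4" by (simp add: PP_def vec6_eq)
lemma PM_q: "PM (e 3 - e 4) = e 3 - e 4" by (simp add: PM_def vec6_eq)

lemma split_gen:
  assumes g: "good h m"
    and Th: "\<And>x. x \<in> h \<Longrightarrow> T x \<in> h" and Tm: "\<And>x. x \<in> m \<Longrightarrow> T x \<in> m"
    and Ph: "\<And>x. x \<in> h \<Longrightarrow> P x \<in> h" and Pm: "\<And>x. x \<in> m \<Longrightarrow> P x \<in> m"
    and Padd: "\<And>x y. P (x + y) = P x + P y" and Pq: "P q = q"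
    and Pform: "\<And>z. P z = (P z $ i) *\<^sub>R p + (P z $ j) *\<^sub>R q"
    and TP: "\<And>z. T (P z) = (P z $ j) *\<^sub>R p"
    and p0: "p \<noteq> 0" and qj: "q $ j = 1"
  shows "(p \<in> h \<and> q \<in> h) \<or> (p \<in> m \<and> q \<in> m)"
proof -
  obtain a' b' where ab: "a' \<in> h" "b' \<in> m" "q = a' + b'" using good_dec[OF g] by blast
  let ?a = "P a'" and ?b = "P b'"
  have a: "?a \<in> h" using Ph ab(1) .
  have b: "?b \<in> m" using Pm ab(2) .
  have q: "q = ?a + ?b" using Pq ab(3) Padd by metis
  have bj: "?b $ j = 1 - ?a $ j" using arg_cong[OF q, of "\<lambda>v. v $ j"] qj by simp
  have aa: "?a = (?a $ j) *\<^sub>R q + (?a $ i) *\<^sub>R p" using Pform[of a'] by (simp add: add.commute)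
  have "T ?a = (?a $ j) *\<^sub>R p" using TP .
  then have ph: "(?a $ j) *\<^sub>R p \<in> h" using Th[OF a] by simp
  have "T ?b = (1 - ?a $ j) *\<^sub>R p" using TP[of b'] bj by simp
  then have pm: "(1 - ?a $ j) *\<^sub>R p \<in> m" using Tm[OF b] by simp
  show ?thesis by (rule blk[OF g p0 a b q aa ph pm])
qed

definition yH :: "real \<Rightarrow> real^6" where "yH c = e 2 + c *\<^sub>R e 5"

lemma clos_h: "good h m \<Longrightarrow> yH c \<in> h \<Longrightarrow> x \<in> h \<Longrightarrow> PP x \<in> h \<and> PM x \<in> h"
  using closure_P[OF good_sub, of h m c] good_hh[of h m "yH c"] unfolding yH_def by blast
lemma clos_m: "good h m \<Longrightarrow> yH c \<in> h \<Longrightarrow> x \<in> m \<Longrightarrow> PP x \<in> m \<and> PM x \<in> m"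
  using closure_P[OF good_subm, of h m c] good_hm[of h m "yH c"] unfolding yH_def by blast

lemma splitP_c:
  assumes g: "good h m" and y: "yH c \<in> h" and c: "c \<noteq> 0"
  shows "(e 1 - e 6 \<in> h \<and> e 3 + e 4 \<in> h) \<or> (e 1 - e 6 \<in> m \<and> e 3 + e 4 \<in> m)"
proof (rule split_gen[OF g, where T = "\<lambda>x. (1/c) *\<^sub>R (lie_br (yH c) x - x)" and P = PP and i = 1 and j = 3])
  show "\<And>x. x \<in> h \<Longrightarrow> (1/c) *\<^sub>R (lie_br (yH c) x - x) \<in> h"
    using good_hh[OF g y] good_sub[OF g] by (metis subspace_diff subspace_scale)
  show "\<And>x. x \<in> m \<Longrightarrow> (1/c) *\<^sub>R (lie_br (yH c) x - x) \<in> m"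
    using good_hm[OF g y] good_subm[OF g] by (metis subspace_diff subspace_scale)
  show "\<And>z. (1/c) *\<^sub>R (lie_br (yH c) (PP z) - PP z) = (PP z $ 3) *\<^sub>R (e 1 - e 6)"
    using c by (simp add: vec6_eq yH_def PP_def field_simps)
qed (use clos_h[OF g y] clos_m[OF g y] PP_add PP_q PP_form in \<open>auto simp: vec6_eq\<close>)

lemma splitM_c:
  assumes g: "good h m" and y: "yH c \<in> h" and c: "c \<noteq> 0"
  shows "(e 1 + e 6 \<in> h \<and> e 3 - e 4 \<in> h) \<or> (e 1 + e 6 \<in> m \<and> e 3 - e 4 \<in> m)"
proof (rule split_gen[OF g, where T = "\<lambda>x. (1/c) *\<^sub>R (lie_br (yH c) x + x)" and P = PM and i = 1 and j = 3])
  show "\<And>x. x \<in> h \<Longrightarrow> (1/c) *\<^sub>R (lie_br (yH c) x + x) \<in> h"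
    using good_hh[OF g y] good_sub[OF g] by (metis subspace_add subspace_scale)
  show "\<And>x. x \<in> m \<Longrightarrow> (1/c) *\<^sub>R (lie_br (yH c) x + x) \<in> m"
    using good_hm[OF g y] good_subm[OF g] by (metis subspace_add subspace_scale)
  show "\<And>z. (1/c) *\<^sub>R (lie_br (yH c) (PM z) + PM z) = (PM z $ 3) *\<^sub>R (e 1 + e 6)"
    using c by (simp add: vec6_eq yH_def PM_def field_simps)
qed (use clos_h[OF g y] clos_m[OF g y] PM_add PM_q PM_form in \<open>auto simp: vec6_eq\<close>)

lemma four_std:
  assumes "dim S = 3" "e 1 - e 6 \<in> S" "e 3 + e 4 \<in> S" "e 1 + e 6 \<in> S" "e 3 - e 4 \<in> S"
  shows False
  by (rule four_contra[OF assms, of "e 1 - e 6" "e 3 + e 4" "e 1 + e 6" "e 3 - e 4"]) (simp_all add: inner6)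

lemma m_PP0:
  assumes g: "good h m" and y: "yH c \<in> h" and hp: "e 1 - e 6 \<in> h" "e 3 + e 4 \<in> h" and x: "x \<in> m"
  shows "PP x = 0"
proof -
  have "PP x \<in> m" using clos_m[OF g y x] by simp
  moreover have "PP x \<in> h" using PP_form[of x] hp good_sub[OF g]
    by (metis subspace_add subspace_scale)
  ultimately show ?thesis using good_int[OF g] by blast
qed

lemma m_PM0:
  assumes g: "good h m" and y: "yH c \<in> h" and hp: "e 1 + e 6 \<in> h" "e 3 - e 4 \<in> h" and x: "x \<in> m"
  shows "PM x = 0"
proof -
  have "PM x \<in> m" using clos_m[OF g y x] by simp
  moreover have "PM x \<in> h" using PM_form[of x] hp good_sub[OF g]
    by (metis subspace_add subspace_scale)
  ultimately show ?thesis using good_int[OF g] by blast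
qed

lemma mixed_contra:
  assumes g: "good h m" and y: "yH c \<in> h"
    and A: "(e 1 - e 6 \<in> h \<and> e 3 + e 4 \<in> h) \<and> (e 1 + e 6 \<in> m \<and> e 3 - e 4 \<in> m)
        \<or> (e 1 - e 6 \<in> m \<and> e 3 + e 4 \<in> m) \<and> (e 1 + e 6 \<in> h \<and> e 3 - e 4 \<in> h)"
  shows False
  using A
proof
  assume a: "(e 1 - e 6 \<in> h \<and> e 3 + e 4 \<in> h) \<and> (e 1 + e 6 \<in> m \<and> e 3 - e 4 \<in> m)"
  have "is_subalgebra m"
    by (rule subalg_PP0[OF good_subm[OF g]]) (use m_PP0[OF g y] a in auto)
  then show False using good_gen[OF g] by blast
next
  assume a: "(e 1 - e 6 \<in> m \<and> e 3 + e 4 \<in> m) \<and> (e 1 + e 6 \<in> h \<and> e 3 - e 4 \<in> h)"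
  have "is_subalgebra m"
    by (rule subalg_PM0[OF good_subm[OF g]]) (use m_PM0[OF g y] a in auto)
  then show False using good_gen[OF g] by blast
qed

lemma hypA_c:
  assumes g: "good h m" and y: "yH c \<in> h" and c: "c \<noteq> 0"
  shows False
  using splitP_c[OF g y c] splitM_c[OF g y c] four_std[OF good_dimh[OF g]] four_std[OF good_dimm[OF g]]
    mixed_contra[OF g y] by blast

lemma splitP_5:
  assumes g: "good h m" and y: "yH 0 \<in> h" and e5: "e 5 \<in> h"
  shows "(e 1 - e 6 \<in> h \<and> e 3 + e 4 \<in> h) \<or> (e 1 - e 6 \<in> m \<and> e 3 + e 4 \<in> m)"
proof (rule split_gen[OF g, where T = "\<lambda>x. lie_br (e 5) x" and P = PP and i = 1 and j = 3])
  show "\<And>z. lie_br (e 5) (PP z) = (PP z $ 3) *\<^sub>R (e 1 - e 6)"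
    by (simp add: vec6_eq PP_def field_simps)
qed (use clos_h[OF g y] clos_m[OF g y] PP_add PP_q PP_form good_hh[OF g e5] good_hm[OF g e5] in \<open>auto simp: vec6_eq\<close>)

lemma splitM_5:
  assumes g: "good h m" and y: "yH 0 \<in> h" and e5: "e 5 \<in> h"
  shows "(e 1 + e 6 \<in> h \<and> e 3 - e 4 \<in> h) \<or> (e 1 + e 6 \<in> m \<and> e 3 - e 4 \<in> m)"
proof (rule split_gen[OF g, where T = "\<lambda>x. lie_br (e 5) x" and P = PM and i = 1 and j = 3])
  show "\<And>z. lie_br (e 5) (PM z) = (PM z $ 3) *\<^sub>R (e 1 + e 6)"
    by (simp add: vec6_eq PM_def field_simps)
qed (use clos_h[OF g y] clos_m[OF g y] PM_add PM_q PM_form good_hh[OF g e5] good_hm[OF g e5] in \<open>auto simp: vec6_eq\<close>)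

lemma hypA_5:
  assumes g: "good h m" and y: "yH 0 \<in> h" and e5: "e 5 \<in> h"
  shows False
proof -
  have e2: "e 2 \<in> h" using y by (simp add: yH_def)
  have P: "\<not> (e 1 - e 6 \<in> h \<and> e 3 + e 4 \<in> h)"
    using four_contra[OF good_dimh[OF g] e2 e5, of "e 1 - e 6" "e 3 + e 4" "e 2" "e 5" "e 1 - e 6" "e 3 + e 4"]
    by (auto simp: inner6)
  have M: "\<not> (e 1 + e 6 \<in> h \<and> e 3 - e 4 \<in> h)"
    using four_contra[OF good_dimh[OF g] e2 e5, of "e 1 + e 6" "e 3 - e 4" "e 2" "e 5" "e 1 + e 6" "e 3 - e 4"]
    by (auto simp: inner6)
  show False using splitP_5[OF g y e5] splitM_5[OF g y e5] P M four_std[OF good_dimm[OF g]] by blast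
qed


lemma PP_c: "PP x $ 2 = 0" "PP x $ 5 = 0" "PP x $ 4 = PP x $ 3" "PP x $ 6 = - PP x $ 1"
  by (simp_all add: PP_def field_simps)
lemma PM_c: "PM x $ 2 = 0" "PM x $ 5 = 0" "PM x $ 4 = - PM x $ 3" "PM x $ 6 = PM x $ 1"
  by (simp_all add: PM_def field_simps)
lemma P0_eq: "x - PP x - PM x = x$2 *\<^sub>R e 2 + x$5 *\<^sub>R e 5"
  by (simp add: vec6_eq PP_def PM_def field_simps)

lemma h5:
  assumes g: "good h m" and y: "yH 0 \<in> h" and e5: "e 5 \<notin> h" and x: "x \<in> h"
  shows "x$5 = 0"
proof (rule ccontr)
  assume n: "x$5 \<noteq> 0"
  have sh: "subspace h" using good_sub[OF g] .
  have e2: "e 2 \<in> h" using y by (simp add: yH_def)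
  have "x - PP x - PM x \<in> h" using clos_h[OF g y x] x sh by (simp add: subspace_diff)
  then have "x$2 *\<^sub>R e 2 + x$5 *\<^sub>R e 5 \<in> h" by (simp add: P0_eq)
  then have "x$2 *\<^sub>R e 2 + x$5 *\<^sub>R e 5 - x$2 *\<^sub>R e 2 \<in> h"
    using e2 sh subspace_diff subspace_scale by blast
  then have "x$5 *\<^sub>R e 5 \<in> h" by simp
  then have "(1 / x$5) *\<^sub>R (x$5 *\<^sub>R e 5) \<in> h" using sh subspace_scale by blast
  then show False using n e5 by simp
qed

lemma S1case:
  assumes g: "good h m" and y: "yH 0 \<in> h" and e5: "e 5 \<notin> h" and P: "\<And>x. x \<in> h \<Longrightarrow> PP x = 0"
  shows False
proof -
  have sh: "subspace h" using good_sub[OF g] .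
  have e2: "e 2 \<in> h" using y by (simp add: yH_def)
  have "h \<subseteq> span {e 2, e 1 + e 6, e 3 - e 4}"
  proof
    fix x assume x: "x \<in> h"
    have "x = (x - PP x - PM x) + PM x" using P[OF x] by simp
    also have "\<dots> = x$2 *\<^sub>R e 2 + (PM x $ 1) *\<^sub>R (e 1 + e 6) + (PM x $ 3) *\<^sub>R (e 3 - e 4)"
      using h5[OF g y e5 x] by (simp add: P0_eq PM_form[symmetric])
    also have "\<dots> \<in> span {e 2, e 1 + e 6, e 3 - e 4}" by (intro span_add span_scale span_base) auto
    finally show "x \<in> span {e 2, e 1 + e 6, e 3 - e 4}" .
  qed
  then have hE: "h = span {e 2, e 1 + e 6, e 3 - e 4}" using three_eq sh good_dimh[OF g] by blast
  have hm: "e 1 + e 6 \<in> h" "e 3 - e 4 \<in> h" unfolding hE by (simp_all add: span_base)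
  have inm: "\<And>q. PP q = q \<Longrightarrow> q \<in> m"
  proof -
    fix q assume q: "PP q = q"
    obtain a b where ab: "a \<in> h" "b \<in> m" "q = a + b" using good_dec[OF g] by blast
    have "q = PP a + PP b" using q ab(3) PP_add by metis
    then have "q = PP b" using P[OF ab(1)] by simp
    then show "q \<in> m" using clos_m[OF g y ab(2)] by simp
  qed
  have "e 1 - e 6 \<in> m" "e 3 + e 4 \<in> m" by (rule inm, simp add: PP_def vec6_eq)+
  then show False using mixed_contra[OF g y] hm by blast
qed

lemma S2case:
  assumes g: "good h m" and y: "yH 0 \<in> h" and e5: "e 5 \<notin> h" and P: "\<And>x. x \<in> h \<Longrightarrow> PM x = 0"
  shows False
proof -
  have sh: "subspace h" using good_sub[OF g] .
  have e2: "e 2 \<in> h" using y by (simp add: yH_def)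
  have "h \<subseteq> span {e 2, e 1 - e 6, e 3 + e 4}"
  proof
    fix x assume x: "x \<in> h"
    have "x = (x - PP x - PM x) + PP x" using P[OF x] by simp
    also have "\<dots> = x$2 *\<^sub>R e 2 + (PP x $ 1) *\<^sub>R (e 1 - e 6) + (PP x $ 3) *\<^sub>R (e 3 + e 4)"
      using h5[OF g y e5 x] by (simp add: P0_eq PP_form[symmetric])
    also have "\<dots> \<in> span {e 2, e 1 - e 6, e 3 + e 4}" by (intro span_add span_scale span_base) auto
    finally show "x \<in> span {e 2, e 1 - e 6, e 3 + e 4}" .
  qed
  then have hE: "h = span {e 2, e 1 - e 6, e 3 + e 4}" using three_eq sh good_dimh[OF g] by blast
  have hm: "e 1 - e 6 \<in> h" "e 3 + e 4 \<in> h" unfolding hE by (simp_all add: span_base)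
  have inm: "\<And>q. PM q = q \<Longrightarrow> q \<in> m"
  proof -
    fix q assume q: "PM q = q"
    obtain a b where ab: "a \<in> h" "b \<in> m" "q = a + b" using good_dec[OF g] by blast
    have "q = PM a + PM b" using q ab(3) PM_add by metis
    then have "q = PM b" using P[OF ab(1)] by simp
    then show "q \<in> m" using clos_m[OF g y ab(2)] by simp
  qed
  have "e 1 + e 6 \<in> m" "e 3 - e 4 \<in> m" by (rule inm, simp add: PM_def vec6_eq)+
  then show False using mixed_contra[OF g y] hm by blast
qed

lemma hypA0:
  assumes g: "good h m" and y: "yH 0 \<in> h" and e5: "e 5 \<notin> h"
  shows "Goal h m"
proof -
  have sh: "subspace h" using good_sub[OF g] .
  have e2: "e 2 \<in> h" using y by (simp add: yH_def)
  obtain x1 where x1: "x1 \<in> h" "PP x1 \<noteq> 0" using S1case[OF g y e5] by blast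
  obtain x2 where x2: "x2 \<in> h" "PM x2 \<noteq> 0" using S2case[OF g y e5] by blast
  define u where "u = PP x1"
  define u' where "u' = PM x2"
  have uh: "u \<in> h" "u' \<in> h" using clos_h[OF g y x1(1)] clos_h[OF g y x2(1)] by (simp_all add: u_def u'_def)
  have uc: "u $ 2 = 0" "u $ 5 = 0" "u $ 4 = u $ 3" "u $ 6 = - u $ 1" unfolding u_def by (rule PP_c)+
  have uc': "u' $ 2 = 0" "u' $ 5 = 0" "u' $ 4 = - u' $ 3" "u' $ 6 = u' $ 1" unfolding u'_def by (rule PM_c)+
  have u0: "u \<bullet> u \<noteq> 0" "u' \<bullet> u' \<noteq> 0" using x1 x2 by (simp_all add: u_def u'_def)
  have hE: "h = span {u', u, e 2}"
    by (rule three_indep[OF sh good_dimh[OF g] e2 uh(1) uh(2)]) (use u0 uc uc' in \<open>simp_all add: inner6\<close>)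
  have "lie_br u u' \<in> h" using good_hh[OF g uh] .
  then have "(lie_br u u') $ 5 = 0" using h5[OF g y e5] by blast
  then have rel: "u$1 * u'$3 = u$3 * u'$1" using uc uc' by (simp add: algebra_simps)
  consider "u$3 = 0 \<and> u'$3 = 0" | "u$3 \<noteq> 0 \<and> u'$3 \<noteq> 0" | "u$3 = 0 \<and> u'$3 \<noteq> 0" | "u$3 \<noteq> 0 \<and> u'$3 = 0"
    by blast
  then show ?thesis
  proof cases
    case 1
    have sub: "subspace {x::real^6. x$3 = 0 \<and> x$4 = 0 \<and> x$5 = 0}" by (auto simp: subspace_def)
    have "{u', u, e 2} \<subseteq> {x. x$3 = 0 \<and> x$4 = 0 \<and> x$5 = 0}" using 1 uc uc' by auto
    then have "h \<subseteq> span {e 1, e 2, e 6}" unfolding hE S126 using span_minimal[OF _ sub] by blast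
    then have "h = span {e 1, e 2, e 6}" using three_eq sh good_dimh[OF g] by blast
    then show ?thesis using caseI[OF g] Goal_NF by blast
  next
    case 2
    define s where "s = u$1 / u$3"
    have s1: "u$1 = s * u$3" using 2 by (simp add: s_def)
    have s2: "u'$1 = s * u'$3" using 2 rel by (simp add: s_def field_simps)
    let ?W = "{x::real^6. x$5 = 0 \<and> x$1 = s * x$3 \<and> x$6 = - s * x$4}"
    have sub: "subspace ?W" by (auto simp: subspace_def algebra_simps)
    have "{u', u, e 2} \<subseteq> ?W" using uc uc' s1 s2 by auto
    then have hW: "h \<subseteq> ?W" unfolding hE using span_minimal[OF _ sub] by blast
    let ?w = "- s *\<^sub>R e 5"
    have wV: "U6 ?w = 0" by (simp add: U6_def vec3_eq)
    let ?X = "xinv ?w"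
    have A: "det (mat 1 :: real^2^2) = 1" "trace ?X = 0" by (simp_all add: xinv det_I)
    have g': "good (Ad (mat 1) ?X ` h) (Ad (mat 1) ?X ` m)" by (rule good_transfer[OF g A])
    have "Ad (mat 1) ?X ` h \<subseteq> span {e 2, e 3, e 4}"
    proof
      fix z assume "z \<in> Ad (mat 1) ?X ` h"
      then obtain v where v: "v \<in> h" "z = Ad (mat 1) ?X v" by blast
      have vW: "v$5 = 0" "v$1 = s * v$3" "v$6 = - s * v$4" using hW v(1) by auto
      have "z = v + lie_br ?w v" using Ad1[OF wV] v(2) by simp
      then show "z \<in> span {e 2, e 3, e 4}" unfolding S234 using vW by simp
    qed
    then have "Ad (mat 1) ?X ` h = span {e 2, e 3, e 4}"
      using three_eq good_sub[OF g'] good_dimh[OF g'] by blast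
    then have "Goal (Ad (mat 1) ?X ` h) (Ad (mat 1) ?X ` m)" using caseII[OF g'] Goal_NF by blast
    then show ?thesis using wlog[OF A] by blast
  next
    case 3
    then have "u$1 = 0" using rel by simp
    then have "u = 0" using 3 uc by (simp add: vec6_eq)
    then show ?thesis using x1 u_def by simp
  next
    case 4
    then have "u'$1 = 0" using rel by simp
    then have "u' = 0" using 4 uc' by (simp add: vec6_eq)
    then show ?thesis using x2 u'_def by simp
  qed
qed


lemma hypA: "good h m \<Longrightarrow> yH c \<in> h \<Longrightarrow> Goal h m"
  by (metis hypA_c hypA_5 hypA0)

lemma DE: "lie_br (e 4 + c *\<^sub>R e 1) x = v6 0 (x$3) (-x$2) 0 (c*x$3 - x$6) (c*x$2 + x$5)"
  by (simp add: vec6_eq)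

lemma ellB:
  assumes g: "good h m" and y: "e 4 + c *\<^sub>R e 1 \<in> h" and ds: "\<And>x. x \<in> h \<Longrightarrow> disc x \<ge> 0"
  shows "Goal h m"
proof -
  let ?y = "e 4 + c *\<^sub>R e 1"
  let ?D = "\<lambda>x. lie_br ?y x"
  have sh: "subspace h" using good_sub[OF g] .
  have cl: "\<And>x. x \<in> h \<Longrightarrow> ?D x \<in> h" using good_hh[OF g y] .
  have s1: "\<And>x. x \<in> h \<Longrightarrow> x$2 = 0 \<and> x$3 = 0"
  proof -
    fix x assume x: "x \<in> h"
    have "v6 0 (x$2) (x$3) 0 (x$5) (x$6) = (-2) *\<^sub>R ?D (?D x) - ?D (?D (?D (?D x)))"
      unfolding DE by (simp add: vec6_eq)
    moreover have "(-2) *\<^sub>R ?D (?D x) - ?D (?D (?D (?D x))) \<in> h"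
      using cl x sh by (meson subspace_diff subspace_scale)
    ultimately have "disc (v6 0 (x$2) (x$3) 0 (x$5) (x$6)) \<ge> 0" using ds by metis
    then have "x$2^2 + x$3^2 \<le> 0" by (simp add: disc_def)
    then show "x$2 = 0 \<and> x$3 = 0" by (smt (verit) power2_less_eq_zero_iff zero_le_power2)
  qed
  have "\<exists>x\<in>h. x$5 \<noteq> 0 \<or> x$6 \<noteq> 0"
  proof (rule ccontr)
    assume "\<not> ?thesis"
    then have "h \<subseteq> span {e 1, e 4}"
    proof (intro subsetI)
      fix x assume x: "x \<in> h" and n: "\<not> (\<exists>x\<in>h. x$5 \<noteq> 0 \<or> x$6 \<noteq> 0)"
      then have "x = x$1 *\<^sub>R e 1 + x$4 *\<^sub>R e 4" using s1[OF x] by (auto simp: vec6_eq)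
      also have "\<dots> \<in> span {e 1, e 4}" by (intro span_add span_scale span_base) auto
      finally show "x \<in> span {e 1, e 4}" .
    qed
    then show False using two_contra good_dimh[OF g] by blast
  qed
  then obtain x where x: "x \<in> h" "x$5 \<noteq> 0 \<or> x$6 \<noteq> 0" by blast
  have xc: "x$2 = 0" "x$3 = 0" using s1[OF x(1)] by auto
  have n: "x$5^2 + x$6^2 \<noteq> 0" using x(2) by (simp add: power2_eq_square)
  have d1: "?D x \<in> h" and d2: "?D (?D x) \<in> h" using cl x(1) by blast+
  have "(x$5^2 + x$6^2) *\<^sub>R e 5 = (- x$6) *\<^sub>R ?D x - x$5 *\<^sub>R ?D (?D x)"
    unfolding DE using xc by (simp add: vec6_eq power2_eq_square)
  then have "(x$5^2 + x$6^2) *\<^sub>R e 5 \<in> h" using d1 d2 sh by (metis subspace_diff subspace_scale)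
  then have "(1/(x$5^2 + x$6^2)) *\<^sub>R ((x$5^2 + x$6^2) *\<^sub>R e 5) \<in> h" using sh subspace_scale by blast
  then have e5: "e 5 \<in> h" using n x(2) by (auto split: if_splits)
  have "(x$5^2 + x$6^2) *\<^sub>R e 6 = x$5 *\<^sub>R ?D x - x$6 *\<^sub>R ?D (?D x)"
    unfolding DE using xc by (simp add: vec6_eq power2_eq_square)
  then have "(x$5^2 + x$6^2) *\<^sub>R e 6 \<in> h" using d1 d2 sh by (metis subspace_diff subspace_scale)
  then have "(1/(x$5^2 + x$6^2)) *\<^sub>R ((x$5^2 + x$6^2) *\<^sub>R e 6) \<in> h" using sh subspace_scale by blast
  then have e6: "e 6 \<in> h" using n x(2) by (auto split: if_splits)
  have s4: "\<And>x. x \<in> h \<Longrightarrow> x$1 = c * x$4"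
  proof (rule ccontr)
    fix x assume x: "x \<in> h" and ne: "x$1 \<noteq> c * x$4"
    have "x - x$4 *\<^sub>R ?y - x$5 *\<^sub>R e 5 - x$6 *\<^sub>R e 6 \<in> h"
      using x y e5 e6 sh by (intro subspace_diff subspace_scale) auto
    moreover have "x - x$4 *\<^sub>R ?y - x$5 *\<^sub>R e 5 - x$6 *\<^sub>R e 6 = (x$1 - c * x$4) *\<^sub>R e 1"
      using s1[OF x] by (simp add: vec6_eq)
    ultimately have "(x$1 - c * x$4) *\<^sub>R e 1 \<in> h" by simp
    then have "(1/(x$1 - c * x$4)) *\<^sub>R ((x$1 - c * x$4) *\<^sub>R e 1) \<in> h" using sh subspace_scale by blast
    then have e1: "e 1 \<in> h" using ne by simp
    then have e4: "e 4 \<in> h" using y sh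
      by (metis add_diff_cancel subspace_diff subspace_scale)
    show False
      using four_contra[OF good_dimh[OF g] e1 e4 e5 e6, of "e 1" "e 4" "e 5" "e 6"] by (simp add: inner6)
  qed
  have "h \<subseteq> span {?y, e 5, e 6}"
  proof
    fix x assume x: "x \<in> h"
    have "x = x$4 *\<^sub>R ?y + x$5 *\<^sub>R e 5 + x$6 *\<^sub>R e 6" using s1[OF x] s4[OF x] by (simp add: vec6_eq)
    also have "\<dots> \<in> span {?y, e 5, e 6}" by (intro span_add span_scale span_base) auto
    finally show "x \<in> span {?y, e 5, e 6}" .
  qed
  then have hE: "h = span {?y, e 5, e 6}" using three_eq sh good_dimh[OF g] by blast
  show ?thesis
  proof (cases "c = 0")
    case True
    then show ?thesis using hE caseIII[OF g] Goal_NF by simp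
  next
    case False
    obtain a b where ab: "a \<in> h" "b \<in> m" "e 2 = a + b" using good_dec[OF g] by blast
    have ac: "a$2 = 0" "a$3 = 0" "a$1 = c * a$4" using s1[OF ab(1)] s4[OF ab(1)] by auto
    have bE: "b = e 2 - a" using ab(3) by simp
    have "?D (?D (?D b)) + ?D b \<in> m"
      using good_hm[OF g y] ab(2) good_subm[OF g] by (meson subspace_add)
    moreover have "?D (?D (?D b)) + ?D b = (-2 * c) *\<^sub>R e 6"
      unfolding bE DE using ac by (simp add: vec6_eq)
    ultimately have "(-2 * c) *\<^sub>R e 6 \<in> m" by simp
    then have "(1 / (-2 * c)) *\<^sub>R ((-2 * c) *\<^sub>R e 6) \<in> m" using good_subm[OF g] subspace_scale by blast
    then have "e 6 \<in> m" using False by simp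
    then have "e 6 = 0" using good_int[OF g e6] by blast
    then show ?thesis by (simp add: vec6_eq)
  qed
qed

lemma DN: "x$2 = 0 \<Longrightarrow> x$4 = x$3 \<Longrightarrow>
  lie_br (e 3 + e 4 + c *\<^sub>R (e 1 + e 6)) x = (-(x$1 + x$6 - 2*c*x$3)) *\<^sub>R e 5 + x$5 *\<^sub>R (e 6 - e 1)"
  by (simp add: vec6_eq algebra_simps)

lemma DN2: "x$2 = 0 \<Longrightarrow> x$4 = x$3 \<Longrightarrow>
  lie_br (e 3 + e 4 + c *\<^sub>R (e 1 + e 6)) (lie_br (e 3 + e 4 + c *\<^sub>R (e 1 + e 6)) x)
     = (-(x$1 + x$6 - 2*c*x$3)) *\<^sub>R (e 6 - e 1)"
  by (simp add: vec6_eq algebra_simps)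

lemma nilC:
  assumes g: "good h m" and y: "e 3 + e 4 + c *\<^sub>R (e 1 + e 6) \<in> h" and ds: "\<And>x. x \<in> h \<Longrightarrow> disc x = 0"
  shows False
proof -
  let ?y = "e 3 + e 4 + c *\<^sub>R (e 1 + e 6)"
  let ?D = "\<lambda>x. lie_br ?y x"
  let ?f = "e 6 - e 1"
  have sh: "subspace h" using good_sub[OF g] .
  have cl: "\<And>x. x \<in> h \<Longrightarrow> ?D x \<in> h" using good_hh[OF g y] .
  have s1: "\<And>x. x \<in> h \<Longrightarrow> x$2 = 0 \<and> x$4 = x$3"
  proof -
    fix x assume x: "x \<in> h"
    have "x + ?y \<in> h" using x y sh by (simp add: subspace_add)
    then have a: "disc (x + ?y) = 0" using ds by blast
    have b: "disc x = 0" using ds x by blast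
    have "x$4 = x$3" using a b by (simp add: disc_def power2_eq_square algebra_simps)
    moreover then have "x$2 * x$2 = 0" using b by (simp add: disc_def power2_eq_square)
    ultimately show "x$2 = 0 \<and> x$4 = x$3" by simp
  qed
  show False
  proof (cases "\<exists>x\<in>h. x$1 + x$6 - 2*c*x$3 \<noteq> 0")
    case True
    then obtain x where x: "x \<in> h" and ne: "x$1 + x$6 - 2*c*x$3 \<noteq> 0" by blast
    let ?s = "x$1 + x$6 - 2*c*x$3"
    have xc: "x$2 = 0" "x$4 = x$3" using s1[OF x] by auto
    have "?D (?D x) \<in> h" using cl x by blast
    then have "(-?s) *\<^sub>R ?f \<in> h" using DN2[OF xc] by simp
    then have "(1/(-?s)) *\<^sub>R ((-?s) *\<^sub>R ?f) \<in> h" using sh subspace_scale by blast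
    then have f: "?f \<in> h" using ne by simp
    have "?D x \<in> h" using cl x by blast
    then have "(-?s) *\<^sub>R e 5 + x$5 *\<^sub>R ?f \<in> h" using DN[OF xc] by simp
    then have "(-?s) *\<^sub>R e 5 + x$5 *\<^sub>R ?f - x$5 *\<^sub>R ?f \<in> h" using f sh subspace_diff subspace_scale by blast
    then have "(-?s) *\<^sub>R e 5 \<in> h" by simp
    then have "(1/(-?s)) *\<^sub>R ((-?s) *\<^sub>R e 5) \<in> h" using sh subspace_scale by blast
    then have e5: "e 5 \<in> h" using ne by simp
    have "x - x$3 *\<^sub>R ?y - x$5 *\<^sub>R e 5 + (x$1 - c * x$3) *\<^sub>R ?f \<in> h"
      by (rule subspace_add[OF sh subspace_diff[OF sh subspace_diff[OF sh x subspace_scale[OF sh y]]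
          subspace_scale[OF sh e5]] subspace_scale[OF sh f]])
    moreover have "x - x$3 *\<^sub>R ?y - x$5 *\<^sub>R e 5 + (x$1 - c * x$3) *\<^sub>R ?f = ?s *\<^sub>R e 6"
      using xc by (simp add: vec6_eq algebra_simps)
    ultimately have "?s *\<^sub>R e 6 \<in> h" by simp
    then have "(1/?s) *\<^sub>R (?s *\<^sub>R e 6) \<in> h" using sh subspace_scale by blast
    then have e6: "e 6 \<in> h" using ne by simp
    have e1: "e 1 \<in> h" using subspace_diff[OF sh e6 f] by simp
    show False
      using four_contra[OF good_dimh[OF g] e1 e5 e6 y, of "e 1" "e 5" "e 6" "e 3"] by (simp add: inner6)
  next
    case False
    then have s0: "\<And>x. x \<in> h \<Longrightarrow> x$1 + x$6 - 2*c*x$3 = 0" by blast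
    have "h \<subseteq> span {?y, e 5, ?f}"
    proof
      fix x assume x: "x \<in> h"
      have "x = x$3 *\<^sub>R ?y + x$5 *\<^sub>R e 5 + (c * x$3 - x$1) *\<^sub>R ?f"
        using s1[OF x] s0[OF x] by (simp add: vec6_eq algebra_simps)
      also have "\<dots> \<in> span {?y, e 5, ?f}" by (intro span_add span_scale span_base) auto
      finally show "x \<in> span {?y, e 5, ?f}" .
    qed
    then have hE: "h = span {?y, e 5, ?f}" using three_eq sh good_dimh[OF g] by blast
    have f: "?f \<in> h" unfolding hE by (simp add: span_base)
    obtain a b where ab: "a \<in> h" "b \<in> m" "e 1 + e 6 = a + b" using good_dec[OF g] by blast
    have ac: "a$2 = 0" "a$4 = a$3" "a$1 + a$6 - 2*c*a$3 = 0" using s1[OF ab(1)] s0[OF ab(1)] by auto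
    have bE: "b = (e 1 + e 6) - a" using ab(3) by simp
    have "?D (?D b) \<in> m" using good_hm[OF g y] ab(2) by blast
    moreover have "?D (?D b) = (-2) *\<^sub>R ?f"
      unfolding bE using ac by (simp add: vec6_eq algebra_simps)
    ultimately have "(-2) *\<^sub>R ?f \<in> m" by simp
    then have "(-1/2) *\<^sub>R ((-2) *\<^sub>R ?f) \<in> m" using good_subm[OF g] subspace_scale by blast
    then have "?f \<in> m" by simp
    then have "?f = 0" using good_int[OF g f] by blast
    then show False by (simp add: vec6_eq)
  qed
qed


lemma V_ideal: "is_ideal (span {e 1, e 5, e 6})"
  unfolding is_ideal_def S156 by (auto simp: subspace_def)

lemma step:
  assumes g: "good h m" and x: "x \<in> h" and A: "det A = 1" and M: "M3 A (U6 x) = u"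
    and N2: "\<And>v. U6 v = u \<Longrightarrow> \<exists>X c. trace X = 0 \<and> Ad (mat 1) X v = \<mu> *\<^sub>R F c"
    and mu: "\<mu> \<noteq> 0"
    and fin: "\<And>h' m' c. good h' m' \<Longrightarrow> F c \<in> h' \<Longrightarrow> (\<forall>z\<in>h'. \<exists>w\<in>h. disc z = disc w) \<Longrightarrow> Goal h' m'"
  shows "Goal h m"
proof -
  let ?X0 = "xinv 0 :: real^2^2"
  have A0: "trace ?X0 = 0" by (simp add: xinv)
  let ?v = "Ad A ?X0 x"
  have "U6 ?v = u" using U6_Ad[OF A A0] M by simp
  then obtain X c where X: "trace X = 0" "Ad (mat 1) X ?v = \<mu> *\<^sub>R F c" using N2 by blast
  have I: "det (mat 1 :: real^2^2) = 1" by (simp add: det_I)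
  let ?h1 = "Ad A ?X0 ` h" and ?m1 = "Ad A ?X0 ` m"
  have g1: "good ?h1 ?m1" by (rule good_transfer[OF g A A0])
  let ?h2 = "Ad (mat 1) X ` ?h1" and ?m2 = "Ad (mat 1) X ` ?m1"
  have g2: "good ?h2 ?m2" by (rule good_transfer[OF g1 I X(1)])
  have "\<mu> *\<^sub>R F c \<in> ?h2" using X(2) x by (metis image_eqI)
  then have "(1/\<mu>) *\<^sub>R (\<mu> *\<^sub>R F c) \<in> ?h2" using good_sub[OF g2] subspace_scale by blast
  then have F: "F c \<in> ?h2" using mu by simp
  have D: "\<forall>z\<in>?h2. \<exists>w\<in>h. disc z = disc w"
    using disc_Ad[OF A A0] disc_Ad[OF I X(1)] by auto
  have "Goal ?h2 ?m2" using fin[OF g2 F D] .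
  then have "Goal ?h1 ?m1" using wlog[OF I X(1)] by blast
  then show ?thesis using wlog[OF A A0] by blast
qed

theorem main_goal:
  assumes g: "good h m" and noid: "\<forall>I. is_ideal I \<and> I \<subseteq> h \<longrightarrow> I = {0}"
  shows "Goal h m"
proof -
  have sh: "subspace h" using good_sub[OF g] .
  have "\<not> h \<subseteq> span {e 1, e 5, e 6}"
  proof
    assume "h \<subseteq> span {e 1, e 5, e 6}"
    then have "h = span {e 1, e 5, e 6}" using three_eq sh good_dimh[OF g] by blast
    then have "span {e 1, e 5, e 6} = {0}" using noid V_ideal by auto
    moreover have "e 1 \<in> span {e 1, e 5, e 6}" by (simp add: span_base)
    ultimately show False by (simp add: vec6_eq)
  qed
  then obtain x0 where x0: "x0 \<in> h" "U6 x0 \<noteq> 0" unfolding S156 by (auto simp: U6_def vec3_eq)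
  show ?thesis
  proof (cases "\<exists>x\<in>h. disc x < 0")
    case True
    then obtain x where x: "x \<in> h" "disc x < 0" by blast
    obtain A \<mu> where A: "det A = 1" "\<mu> \<noteq> 0" "M3 A (U6 x) = vector [\<mu>, 0, 0]" using N1h[OF x(2)] by blast
    show ?thesis
    proof (rule step[OF g x(1) A(1) A(3) _ A(2)])
      show "\<And>v. U6 v = vector [\<mu>, 0, 0] \<Longrightarrow> \<exists>X c. trace X = 0 \<and> Ad (mat 1) X v = \<mu> *\<^sub>R yH c"
        using N2h[OF _ A(2)] unfolding yH_def by blast
      show "\<And>h' m' c. good h' m' \<Longrightarrow> yH c \<in> h' \<Longrightarrow> (\<forall>z\<in>h'. \<exists>w\<in>h. disc z = disc w) \<Longrightarrow> Goal h' m'"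
        using hypA by blast
    qed
  next
    case nh: False
    show ?thesis
    proof (cases "\<exists>x\<in>h. disc x > 0")
      case True
      then obtain x where x: "x \<in> h" "disc x > 0" by blast
      obtain A \<mu> where A: "det A = 1" "\<mu> \<noteq> 0" "M3 A (U6 x) = vector [0, 0, \<mu>]" using N1e[OF x(2)] by blast
      show ?thesis
      proof (rule step[OF g x(1) A(1) A(3) _ A(2)])
        show "\<And>v. U6 v = vector [0, 0, \<mu>] \<Longrightarrow> \<exists>X c. trace X = 0 \<and> Ad (mat 1) X v = \<mu> *\<^sub>R (e 4 + c *\<^sub>R e 1)"
          using N2e[OF _ A(2)] by blast
        show "\<And>h' m' c. good h' m' \<Longrightarrow> e 4 + c *\<^sub>R e 1 \<in> h' \<Longrightarrow> (\<forall>z\<in>h'. \<exists>w\<in>h. disc z = disc w) \<Longrightarrow> Goal h' m'"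
          using ellB nh by (metis not_less)
      qed
    next
      case False
      then have d0: "\<And>w. w \<in> h \<Longrightarrow> disc w = 0" using nh by (meson linorder_neqE_linordered_idom)
      obtain A \<mu> where A: "det A = 1" "\<mu> \<noteq> 0" "M3 A (U6 x0) = vector [0, \<mu>, \<mu>]"
        using N1n[OF d0[OF x0(1)] x0(2)] by blast
      show ?thesis
      proof (rule step[OF g x0(1) A(1) A(3) _ A(2)])
        show "\<And>v. U6 v = vector [0, \<mu>, \<mu>] \<Longrightarrow> \<exists>X c. trace X = 0 \<and> Ad (mat 1) X v = \<mu> *\<^sub>R (e 3 + e 4 + c *\<^sub>R (e 1 + e 6))"
          using N2n[OF _ A(2)] by blast
        show "\<And>h' m' c. good h' m' \<Longrightarrow> e 3 + e 4 + c *\<^sub>R (e 1 + e 6) \<in> h' \<Longrightarrow> (\<forall>z\<in>h'. \<exists>w\<in>h. disc z = disc w) \<Longrightarrow> Goal h' m'"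
          using nilC d0 by metis
      qed
    qed
  qed
qed

theorem lemma18:
  fixes h m :: "(real^6) set"
  assumes h_sub: "is_subalgebra h" and h_dim: "dim h = 3"
    and h_noideal: "\<forall>I. is_ideal I \<and> I \<subseteq> h \<longrightarrow> I = {0}"
    and m_sub: "subspace m" and m_dim: "dim m = 3"
    and compl: "h \<inter> m = {0}" "{x + y | x y. x \<in> h \<and> y \<in> m} = UNIV"
    and m_gen: "generates m"
    and hm: "\<forall>x\<in>h. \<forall>y\<in>m. lie_br x y \<in> m"
  shows "\<exists>A X. det A = 1 \<and> trace X = 0 \<and>
    ((\<exists>b2 b3. Ad A X ` h = span {e 1, e 2, e 6} \<and>
        Ad A X ` m = span {e 5, e 3 - b3 *\<^sub>R e 1 - b2 *\<^sub>R e 6, e 4 + b2 *\<^sub>R e 1 + b3 *\<^sub>R e 6})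
     \<or> (\<exists>a. a \<noteq> 0 \<and> Ad A X ` h = span {e 2, e 3, e 4} \<and>
        Ad A X ` m = span {e 1 + a *\<^sub>R e 4, e 6 - a *\<^sub>R e 3, e 5 + a *\<^sub>R e 2})
     \<or> (\<exists>b1 b2. Ad A X ` h = span {e 4, e 5, e 6} \<and>
        Ad A X ` m = span {e 1, e 2 + b1 *\<^sub>R e 6 + b2 *\<^sub>R e 5, e 3 - b2 *\<^sub>R e 6 + b1 *\<^sub>R e 5}))"
proof -
  have "good h m" unfolding good_def using assms by blast
  then have "Goal h m" using main_goal h_noideal by blast
  then show ?thesis unfolding Goal_def NF_def .
qed


end
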